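(* Let $f:[1,\infty)\to\mathbb R$ be convex and monotonically increasing with $f(1)=0$. For finite-dimensional $\mathcal H_1,\mathcal H_2$ and density operators $\sigma$ on $\mathcal H_1\otimes\mathcal H_2$ set $E_f(\sigma):=f(\|\sigma\|_\gamma)$. Then $E_f$ satisfies: (E0) $E_f\ge0$ and $E_f(\rho)$ does not change when $\mathcal H_1,\mathcal H_2$ are isometrically embedded in larger finite-dimensional Hilbert spaces; (E1) $E_f(\sigma)=0$ for every separable $\sigma$; (E2) $E_f((U_1\otimes U_2)\sigma(U_1^\dagger\otimes U_2^\dagger))=E_f(\sigma)$ for all local unitaries $U_1,U_2$; (E3) $E_f((T_1\otimes T_2)(\sigma))\le E_f(\sigma)$ for all trace-preserving operations $T_1$ on $\mathcal T(\mathcal H_1)$ and $T_2$ on $\mathcal T(\mathcal H_2)$ (mapping into trace classes of finite-dimensional spaces); (E4) $E_f$ is convex on the set of density operators. In particular $E(\sigma)=\|\sigma\|_\gamma-1$ has these properties.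
   Context: A density operator is a positive trace class operator with trace one; it is separable if it is a finite positive combination $\sum_i\omega_i\rho^{(1)}_i\otimes\rho^{(2)}_i$ of products of density operators. $\|x\|_1$ is the trace norm. An operation is a linear completely positive map between trace class spaces that is trace non-increasing on positive operators; trace-preserving if it preserves traces of positive operators. The greatest cross norm is $\|t\|_\gamma:=\inf\{\sum_{i=1}^n\|u_i\|_1\|v_i\|_1 : t=\sum_{i=1}^n u_i\otimes v_i\}$ over finite decompositions into elementary tensors of operators on $\mathcal H_1$ and $\mathcal H_2$. For density operators $\|\sigma\|_\gamma\ge1$. *)

theory Defs
  imports "HOL-Analysis.Convex" "Jordan_Normal_Form.Matrix"
begin

text \<open>Finite-dimensional Hilbert spaces are modelled as \<open>\<complex>^n\<close>; operators on them
  as \<open>n \<times> n\<close> complex matrices (type \<open>complex mat\<close> with carrier \<open>carrier_mat n n\<close>).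
  The tensor product \<open>\<complex>^n \<otimes> \<complex>^m\<close> is \<open>\<complex>^(n*m)\<close> with basis index \<open>i*m+k\<close>
  (first factor outer), i.e. the Kronecker product.\<close>

definition adj :: "complex mat \<Rightarrow> complex mat" where
  "adj A = mat (dim_col A) (dim_row A) (\<lambda>(i,j). cnj (A $$ (j,i)))"

definition mtrace :: "complex mat \<Rightarrow> complex" where
  "mtrace A = (\<Sum>i<dim_row A. A $$ (i,i))"

definition psd :: "nat \<Rightarrow> complex mat \<Rightarrow> bool" where
  "psd n A \<longleftrightarrow> A \<in> carrier_mat n n \<and>
     (\<forall>v :: nat \<Rightarrow> complex.
        Im (\<Sum>i<n. \<Sum>j<n. cnj (v i) * A $$ (i,j) * v j) = 0 \<and>
        0 \<le> Re (\<Sum>i<n. \<Sum>j<n. cnj (v i) * A $$ (i,j) * v j))"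

definition density :: "nat \<Rightarrow> complex mat \<Rightarrow> bool" where
  "density n A \<longleftrightarrow> psd n A \<and> mtrace A = 1"

definition mat_abs :: "complex mat \<Rightarrow> complex mat" where
  "mat_abs A = (THE P. psd (dim_col A) P \<and> P * P = adj A * A)"

definition trace_norm :: "complex mat \<Rightarrow> real" where
  "trace_norm A = Re (mtrace (mat_abs A))"

definition kron :: "complex mat \<Rightarrow> complex mat \<Rightarrow> complex mat" where
  "kron A B = mat (dim_row A * dim_row B) (dim_col A * dim_col B)
     (\<lambda>(i,j). A $$ (i div dim_row B, j div dim_col B) * B $$ (i mod dim_row B, j mod dim_col B))"

definition msum :: "nat \<Rightarrow> nat \<Rightarrow> nat \<Rightarrow> (nat \<Rightarrow> complex mat) \<Rightarrow> complex mat" where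
  "msum r c N F = mat r c (\<lambda>(i,j). \<Sum>k<N. F k $$ (i,j))"

definition cross_norm :: "nat \<Rightarrow> nat \<Rightarrow> complex mat \<Rightarrow> real" where
  "cross_norm n m t = Inf {(\<Sum>i<N. trace_norm (u i) * trace_norm (v i)) | N u v.
      (\<forall>i<N. u i \<in> carrier_mat n n \<and> v i \<in> carrier_mat m m) \<and>
      t = msum (n*m) (n*m) N (\<lambda>i. kron (u i) (v i))}"

definition separable :: "nat \<Rightarrow> nat \<Rightarrow> complex mat \<Rightarrow> bool" where
  "separable n m \<sigma> \<longleftrightarrow> (\<exists>N (\<omega>::nat \<Rightarrow> real) \<rho>1 \<rho>2.
      (\<forall>i<N. 0 < \<omega> i \<and> density n (\<rho>1 i) \<and> density m (\<rho>2 i)) \<and>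
      \<sigma> = msum (n*m) (n*m) N (\<lambda>i. complex_of_real (\<omega> i) \<cdot>\<^sub>m kron (\<rho>1 i) (\<rho>2 i)))"

definition unitary :: "nat \<Rightarrow> complex mat \<Rightarrow> bool" where
  "unitary n U \<longleftrightarrow> U \<in> carrier_mat n n \<and> adj U * U = 1\<^sub>m n \<and> U * adj U = 1\<^sub>m n"

definition isometry :: "nat \<Rightarrow> nat \<Rightarrow> complex mat \<Rightarrow> bool" where
  "isometry n n' V \<longleftrightarrow> V \<in> carrier_mat n' n \<and> adj V * V = 1\<^sub>m n"

definition munit :: "nat \<Rightarrow> nat \<Rightarrow> nat \<Rightarrow> complex mat" where
  "munit n i j = mat n n (\<lambda>(r,c). if r = i \<and> c = j then 1 else 0)"

definition blk :: "nat \<Rightarrow> complex mat \<Rightarrow> nat \<Rightarrow> nat \<Rightarrow> complex mat" where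
  "blk n X a b = mat n n (\<lambda>(i,j). X $$ (a*n+i, b*n+j))"

text \<open>\<open>id_k \<otimes> T\<close> for a map \<open>T\<close> from operators on \<open>\<complex>^n\<close> to operators on \<open>\<complex>^n'\<close>.\<close>
definition ampl :: "nat \<Rightarrow> nat \<Rightarrow> nat \<Rightarrow> (complex mat \<Rightarrow> complex mat) \<Rightarrow> complex mat \<Rightarrow> complex mat" where
  "ampl k n n' T X = mat (k*n') (k*n')
     (\<lambda>(r,c). T (blk n X (r div n') (c div n')) $$ (r mod n', c mod n'))"

definition operation :: "nat \<Rightarrow> nat \<Rightarrow> (complex mat \<Rightarrow> complex mat) \<Rightarrow> bool" where
  "operation n n' T \<longleftrightarrow>
     (\<forall>A \<in> carrier_mat n n. T A \<in> carrier_mat n' n') \<and>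
     (\<forall>A \<in> carrier_mat n n. \<forall>B \<in> carrier_mat n n. T (A + B) = T A + T B) \<and>
     (\<forall>A \<in> carrier_mat n n. \<forall>c. T (c \<cdot>\<^sub>m A) = c \<cdot>\<^sub>m T A) \<and>
     (\<forall>k X. psd (k*n) X \<longrightarrow> psd (k*n') (ampl k n n' T X)) \<and>
     (\<forall>A. psd n A \<longrightarrow> Re (mtrace (T A)) \<le> Re (mtrace A))"

definition tp_operation :: "nat \<Rightarrow> nat \<Rightarrow> (complex mat \<Rightarrow> complex mat) \<Rightarrow> bool" where
  "tp_operation n n' T \<longleftrightarrow> operation n n' T \<and> (\<forall>A. psd n A \<longrightarrow> mtrace (T A) = mtrace A)"

text \<open>\<open>(T1 \<otimes> T2)(\<sigma>)\<close>: the linear extension of \<open>u \<otimes> v \<mapsto> T1 u \<otimes> T2 v\<close>.\<close>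
definition tensor_map :: "nat \<Rightarrow> nat \<Rightarrow> nat \<Rightarrow> nat \<Rightarrow> (complex mat \<Rightarrow> complex mat) \<Rightarrow>
    (complex mat \<Rightarrow> complex mat) \<Rightarrow> complex mat \<Rightarrow> complex mat" where
  "tensor_map n m n' m' T1 T2 \<sigma> = mat (n'*m') (n'*m') (\<lambda>(r,c).
     \<Sum>i<n. \<Sum>j<n. \<Sum>k<m. \<Sum>l<m.
       \<sigma> $$ (i*m+k, j*m+l) * kron (T1 (munit n i j)) (T2 (munit m k l)) $$ (r,c))"

definition ent_measure :: "(nat \<Rightarrow> nat \<Rightarrow> complex mat \<Rightarrow> real) \<Rightarrow> bool" where
  "ent_measure E \<longleftrightarrow>
   \<comment> \<open>E0: nonnegativity\<close>
   (\<forall>n m \<sigma>. density (n*m) \<sigma> \<longrightarrow> 0 \<le> E n m \<sigma>) \<and>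
   \<comment> \<open>E0: invariance under isometric embeddings\<close>
   (\<forall>n m n' m' V1 V2 \<sigma>. density (n*m) \<sigma> \<and> isometry n n' V1 \<and> isometry m m' V2 \<longrightarrow>
      E n' m' (kron V1 V2 * \<sigma> * adj (kron V1 V2)) = E n m \<sigma>) \<and>
   \<comment> \<open>E1\<close>
   (\<forall>n m \<sigma>. density (n*m) \<sigma> \<and> separable n m \<sigma> \<longrightarrow> E n m \<sigma> = 0) \<and>
   \<comment> \<open>E2\<close>
   (\<forall>n m U1 U2 \<sigma>. density (n*m) \<sigma> \<and> unitary n U1 \<and> unitary m U2 \<longrightarrow>
      E n m (kron U1 U2 * \<sigma> * adj (kron U1 U2)) = E n m \<sigma>) \<and>
   \<comment> \<open>E3\<close>
   (\<forall>n m n' m' T1 T2 \<sigma>. density (n*m) \<sigma> \<and> tp_operation n n' T1 \<and> tp_operation m m' T2 \<longrightarrow>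
      E n' m' (tensor_map n m n' m' T1 T2 \<sigma>) \<le> E n m \<sigma>) \<and>
   \<comment> \<open>E4\<close>
   (\<forall>n m \<sigma> \<tau> (p::real). density (n*m) \<sigma> \<and> density (n*m) \<tau> \<and> 0 \<le> p \<and> p \<le> 1 \<longrightarrow>
      E n m (complex_of_real p \<cdot>\<^sub>m \<sigma> + complex_of_real (1 - p) \<cdot>\<^sub>m \<tau>)
        \<le> p * E n m \<sigma> + (1 - p) * E n m \<tau>)"

end

theory Submission
  imports Defs "Jordan_Normal_Form.Spectral_Radius"
begin


lemma sum_lt_add: "(\<Sum>i<(a::nat)+b. g i) = (\<Sum>i<a. g i) + (\<Sum>i<b. g (a+i))"
  by (induction b) (auto simp: add.assoc)

lemma sum_lt_mult: "(\<Sum>i<(a::nat)*b. g i) = (\<Sum>p<a. \<Sum>q<b. g (p*b+q))"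
proof (induction a)
  case 0 then show ?case by simp
next
  case (Suc a)
  have "(\<Sum>i<Suc a*b. g i) = (\<Sum>i<a*b + b. g i)" by (simp add: add.commute)
  also have "\<dots> = (\<Sum>p<a. \<Sum>q<b. g (p*b+q)) + (\<Sum>q<b. g (a*b+q))" by (simp add: sum_lt_add Suc)
  finally show ?case by simp
qed

lemma sum_lt_2: "(\<Sum>i<2*(k::nat). g i) = (\<Sum>i<k. g i) + (\<Sum>i<k. g (k+i))"
  using sum_lt_add[of g k k] by (simp add: mult_2)

declare index_mult_mat(1)[simp del]

lemma mult_idx: "A \<in> carrier_mat n k \<Longrightarrow> B \<in> carrier_mat k m \<Longrightarrow> i < n \<Longrightarrow> j < m \<Longrightarrow>
  (A * B) $$ (i,j) = (\<Sum>l<k. A $$ (i,l) * B $$ (l,j))"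
  by (auto simp: index_mult_mat scalar_prod_def atLeast0LessThan intro!: sum.cong)

lemma mult_idx2[simp]: "i < dim_row A \<Longrightarrow> j < dim_col B \<Longrightarrow> dim_col A = dim_row B \<Longrightarrow>
  (A * B) $$ (i,j) = (\<Sum>l<dim_row B. A $$ (i,l) * B $$ (l,j))"
  by (auto simp: index_mult_mat scalar_prod_def atLeast0LessThan intro!: sum.cong)

lemma idx_lt[simp]: "(x::nat) < a \<Longrightarrow> y < b \<Longrightarrow> x*b+y < a*b"
proof -
  assume "x < a" "y < b"
  then have "x*b + y < x*b + b" by simp
  also have "\<dots> = (Suc x) * b" by simp
  also have "\<dots> \<le> a * b" using \<open>x < a\<close> by (intro mult_right_mono) auto
  finally show ?thesis .
qed

lemma adj_carrier[simp]: "A \<in> carrier_mat n m \<Longrightarrow> adj A \<in> carrier_mat m n"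
  by (auto simp: adj_def)

lemma adj_dims[simp]: "dim_row (adj A) = dim_col A" "dim_col (adj A) = dim_row A"
  by (auto simp: adj_def)

lemma adj_idx[simp]: "i < dim_col A \<Longrightarrow> j < dim_row A \<Longrightarrow> adj A $$ (i,j) = cnj (A $$ (j,i))"
  by (auto simp: adj_def)

lemma adj_adj[simp]: "adj (adj A) = A"
  by (rule eq_matI) auto

lemma adj_mult: "A \<in> carrier_mat n k \<Longrightarrow> B \<in> carrier_mat k m \<Longrightarrow> adj (A * B) = adj B * adj A"
  by (rule eq_matI) (auto simp: ac_simps)

lemma adj_add: "A \<in> carrier_mat n m \<Longrightarrow> B \<in> carrier_mat n m \<Longrightarrow> adj (A + B) = adj A + adj B"
  by (rule eq_matI) auto

lemma adj_minus: "A \<in> carrier_mat n m \<Longrightarrow> B \<in> carrier_mat n m \<Longrightarrow> adj (A - B) = adj A - adj B"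
  by (rule eq_matI) auto

lemma adj_smult: "adj (c \<cdot>\<^sub>m A) = cnj c \<cdot>\<^sub>m adj A"
  by (rule eq_matI) auto

lemma adj_one[simp]: "adj (1\<^sub>m n) = 1\<^sub>m n"
  by (rule eq_matI) auto

lemma adj_zero[simp]: "adj (0\<^sub>m n m) = 0\<^sub>m m n"
  by (rule eq_matI) auto

lemma mtrace_mult_comm: "A \<in> carrier_mat n k \<Longrightarrow> B \<in> carrier_mat k n \<Longrightarrow> mtrace (A * B) = mtrace (B * A)"
  unfolding mtrace_def
  by (simp add: sum.swap[of _ "{..<n}"] mult.commute)

lemma mtrace_add: "A \<in> carrier_mat n n \<Longrightarrow> B \<in> carrier_mat n n \<Longrightarrow> mtrace (A + B) = mtrace A + mtrace B"
  unfolding mtrace_def by (simp add: sum.distrib)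

lemma mtrace_minus: "A \<in> carrier_mat n n \<Longrightarrow> B \<in> carrier_mat n n \<Longrightarrow> mtrace (A - B) = mtrace A - mtrace B"
  unfolding mtrace_def by (simp add: sum_subtractf)

lemma mtrace_smult: "A \<in> carrier_mat n n \<Longrightarrow> mtrace (c \<cdot>\<^sub>m A) = c * mtrace A"
  unfolding mtrace_def by (auto simp: sum_distrib_left intro!: sum.cong)

lemma mtrace_adj: "A \<in> carrier_mat n n \<Longrightarrow> mtrace (adj A) = cnj (mtrace A)"
  unfolding mtrace_def by simp

lemma mtrace_one[simp]: "mtrace (1\<^sub>m n) = of_nat n"
  unfolding mtrace_def by simp

lemma kron_carrier[simp]: "A \<in> carrier_mat a a' \<Longrightarrow> B \<in> carrier_mat b b' \<Longrightarrow> kron A B \<in> carrier_mat (a*b) (a'*b')"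
  by (auto simp: kron_def)

lemma kron_dims[simp]: "dim_row (kron A B) = dim_row A * dim_row B" "dim_col (kron A B) = dim_col A * dim_col B"
  by (auto simp: kron_def)

lemma kron_idx: "i < dim_row A * dim_row B \<Longrightarrow> j < dim_col A * dim_col B \<Longrightarrow>
  kron A B $$ (i,j) = A $$ (i div dim_row B, j div dim_col B) * B $$ (i mod dim_row B, j mod dim_col B)"
  by (auto simp: kron_def)

lemma kron_idx': "A \<in> carrier_mat a a' \<Longrightarrow> B \<in> carrier_mat b b' \<Longrightarrow> i < a*b \<Longrightarrow> j < a'*b' \<Longrightarrow>
  kron A B $$ (i,j) = A $$ (i div b, j div b') * B $$ (i mod b, j mod b')"
  by (auto simp: kron_def)

lemma divmod_lt: "(p::nat) < a * b \<Longrightarrow> p div b < a" "(p::nat) < a * b \<Longrightarrow> p mod b < b"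
  by (auto simp: less_mult_imp_div_less) (metis mod_less_divisor mult_zero_right neq0_conv not_less_zero)

lemma kron_mult: assumes A: "A \<in> carrier_mat a a'" and B: "B \<in> carrier_mat b b'"
  and C: "C \<in> carrier_mat a' a''" and D: "D \<in> carrier_mat b' b''"
  shows "kron A B * kron C D = kron (A * C) (B * D)"
proof (rule eq_matI)
  fix i j assume i: "i < dim_row (kron (A * C) (B * D))" and j: "j < dim_col (kron (A * C) (B * D))"
  have i': "i < a*b" and j': "j < a''*b''" using i j A B C D by auto
  have "(kron A B * kron C D) $$ (i,j) = (\<Sum>l<a'*b'. kron A B $$ (i,l) * kron C D $$ (l,j))"
    using i' j' A B C D by (intro mult_idx) auto
  also have "\<dots> = (\<Sum>p<a'. \<Sum>q<b'. A $$ (i div b, p) * B $$ (i mod b, q) * (C $$ (p, j div b'') * D $$ (q, j mod b'')))"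
    unfolding sum_lt_mult using A B C D i' j'
    by (intro sum.cong refl) (auto simp: kron_idx' divmod_lt)
  also have "\<dots> = (\<Sum>p<a'. A $$ (i div b, p) * C $$ (p, j div b'')) * (\<Sum>q<b'. B $$ (i mod b, q) * D $$ (q, j mod b''))"
    by (simp add: sum_product ac_simps)
  also have "\<dots> = kron (A * C) (B * D) $$ (i,j)"
    using A B C D i' j' by (subst kron_idx'[of _ a a'' _ b b'']) (auto simp: mult_idx divmod_lt)
  finally show "(kron A B * kron C D) $$ (i,j) = kron (A * C) (B * D) $$ (i,j)" .
qed (use A B C D in auto)

lemma adj_kron: "adj (kron A B) = kron (adj A) (adj B)"
  by (rule eq_matI) (auto simp: kron_idx divmod_lt)

lemma kron_smult_left: "kron (c \<cdot>\<^sub>m A) B = c \<cdot>\<^sub>m kron A B"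
  by (rule eq_matI) (auto simp: kron_idx divmod_lt)

lemma mtrace_kron: assumes A: "A \<in> carrier_mat a a" and B: "B \<in> carrier_mat b b"
  shows "mtrace (kron A B) = mtrace A * mtrace B"
proof -
  have "mtrace (kron A B) = (\<Sum>p<a. \<Sum>q<b. kron A B $$ (p*b+q, p*b+q))"
    unfolding mtrace_def using A B by (simp add: sum_lt_mult)
  also have "\<dots> = (\<Sum>p<a. \<Sum>q<b. A $$ (p,p) * B $$ (q,q))"
    using A B by (intro sum.cong refl) (auto simp: kron_idx')
  also have "\<dots> = mtrace A * mtrace B" unfolding mtrace_def using A B by (simp add: sum_product)
  finally show ?thesis .
qed

lemma divmod_eq_iff: "(b::nat) > 0 \<Longrightarrow> (i div b = j div b \<and> i mod b = j mod b) \<longleftrightarrow> i = j"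
  by (metis div_mult_mod_eq)

lemma kron_one: "kron (1\<^sub>m a) (1\<^sub>m b) = 1\<^sub>m (a*b)"
proof (rule eq_matI)
  fix i j assume "i < dim_row (1\<^sub>m (a * b))" "j < dim_col (1\<^sub>m (a * b))"
  then have "i < a*b" "j < a*b" by auto
  moreover then have "b > 0" by (cases b) auto
  ultimately show "kron (1\<^sub>m a) (1\<^sub>m b) $$ (i, j) = 1\<^sub>m (a * b) $$ (i, j)"
    using divmod_eq_iff[of b i j] by (auto simp: kron_idx divmod_lt)
qed auto


lemma massoc[simp]: "dim_col A = dim_row B \<Longrightarrow> dim_col B = dim_row C \<Longrightarrow> A * B * C = A * (B * C)"
  by (rule assoc_mult_mat[of A "dim_row A" "dim_col A" B "dim_col B" C "dim_col C"]) auto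

lemma one_mult'[simp]: "dim_row (A::complex mat) = n \<Longrightarrow> 1\<^sub>m n * A = A"
  by (rule left_mult_one_mat[of A n "dim_col A"]) auto

lemma mult_one'[simp]: "dim_col (A::complex mat) = n \<Longrightarrow> A * 1\<^sub>m n = A"
  by (rule right_mult_one_mat[of A "dim_row A" n]) auto

lemma mcancel[simp]: "(A::complex mat) * B = 1\<^sub>m n \<Longrightarrow> dim_col A = dim_row B \<Longrightarrow> dim_row X = n \<Longrightarrow> A * (B * X) = X"
proof -
  assume AB: "A * B = 1\<^sub>m n" and d: "dim_col A = dim_row B" and X: "dim_row X = n"
  have "dim_col B = n" using arg_cong[OF AB, of dim_col] by simp
  then have "A * (B * X) = (A * B) * X" using d X by simp
  then show ?thesis using AB X by simp
qed

lemma if_mult_0[simp]: "(if P then x else 0) * (y::'a::mult_zero) = (if P then x * y else 0)"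
  "y * (if P then x else 0) = (if P then y * x else 0)" by auto

lemma sum_if_P[simp]: "(\<Sum>m\<in>S. if P then G m else 0) = (if P then \<Sum>m\<in>S. G m else 0)"
  by auto

lemma cnj_if_0[simp]: "cnj (if P then x else 0) = (if P then cnj x else 0)" by auto

section \<open>Sesquilinear forms and positivity\<close>

definition bf :: "nat \<Rightarrow> complex mat \<Rightarrow> (nat \<Rightarrow> complex) \<Rightarrow> (nat \<Rightarrow> complex) \<Rightarrow> complex" where
  "bf n A x y = (\<Sum>i<n. \<Sum>j<n. cnj (x i) * A $$ (i,j) * y j)"

lemma psd_iff: "psd n A \<longleftrightarrow> A \<in> carrier_mat n n \<and> (\<forall>v. Im (bf n A v v) = 0 \<and> 0 \<le> Re (bf n A v v))"
  unfolding psd_def bf_def by simp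

lemma psdD: "psd n A \<Longrightarrow> Im (bf n A v v) = 0" "psd n A \<Longrightarrow> 0 \<le> Re (bf n A v v)"
  "psd n A \<Longrightarrow> A \<in> carrier_mat n n"
  unfolding psd_iff by auto

definition colv :: "complex mat \<Rightarrow> nat \<Rightarrow> (nat \<Rightarrow> complex)" where
  "colv X c = (\<lambda>i. X $$ (i,c))"

lemma bf_cols: assumes A: "A \<in> carrier_mat n n" and X: "X \<in> carrier_mat n k" and Y: "Y \<in> carrier_mat n k'"
  and c: "c < k" and d: "d < k'"
  shows "bf n A (colv X c) (colv Y d) = (adj X * A * Y) $$ (c,d)"
proof -
  have "(adj X * A * Y) $$ (c,d) = (\<Sum>l<n. cnj (X $$ (l,c)) * (\<Sum>la<n. A $$ (l,la) * Y $$ (la,d)))"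
    using A X Y c d by (simp add: mult_idx)
  also have "\<dots> = bf n A (colv X c) (colv Y d)"
    unfolding bf_def colv_def by (simp add: sum_distrib_left mult.assoc)
  finally show ?thesis by simp
qed

definition vmat :: "nat \<Rightarrow> (nat \<Rightarrow> complex) \<Rightarrow> complex mat" where
  "vmat n v = mat n 1 (\<lambda>(i,j). v i)"

lemma vmat_carrier[simp]: "vmat n v \<in> carrier_mat n 1" "vmat n v \<in> carrier_mat n (Suc 0)" by (auto simp: vmat_def)
lemma vmat_dims[simp]: "dim_row (vmat n v) = n" "dim_col (vmat n v) = 1" by (auto simp: vmat_def)

lemma bf_vmat: "A \<in> carrier_mat n n \<Longrightarrow> bf n A x y = (adj (vmat n x) * A * vmat n y) $$ (0,0)"
proof -
  assume A: "A \<in> carrier_mat n n"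
  have "bf n A x y = bf n A (colv (vmat n x) 0) (colv (vmat n y) 0)"
    unfolding bf_def colv_def vmat_def by (intro sum.cong refl) auto
  also have "\<dots> = (adj (vmat n x) * A * vmat n y) $$ (0,0)"
    using A by (intro bf_cols[of A n "vmat n x" 1 "vmat n y" 1 0 0]) auto
  finally show ?thesis .
qed

lemma bf_congr: assumes A: "A \<in> carrier_mat k k" and X: "X \<in> carrier_mat k n"
  shows "bf n (adj X * A * X) x y = bf k A (colv (X * vmat n x) 0) (colv (X * vmat n y) 0)"
proof -
  have "bf n (adj X * A * X) x y = (adj (vmat n x) * (adj X * A * X) * vmat n y) $$ (0,0)"
    using A X by (intro bf_vmat) auto
  also have "adj (vmat n x) * (adj X * A * X) * vmat n y = adj (X * vmat n x) * A * (X * vmat n y)"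
    using A X by (simp add: adj_mult[OF X vmat_carrier(1)[of n x]])
  also have "\<dots> $$ (0,0) = bf k A (colv (X * vmat n x) 0) (colv (X * vmat n y) 0)"
    using A X by (intro bf_cols[symmetric, of A k "X * vmat n x" 1 "X * vmat n y" 1 0 0]) auto
  finally show ?thesis .
qed

lemma psd_congr: assumes P: "psd k A" and X: "X \<in> carrier_mat k n"
  shows "psd n (adj X * A * X)"
  unfolding psd_iff
  using bf_congr[OF psdD(3)[OF P] X] psdD[OF P] X P by (auto simp: psd_iff)

lemma bf_one: "bf n (1\<^sub>m n) x x = (\<Sum>i<n. cnj (x i) * x i)"
proof -
  have "\<And>i j. i < n \<Longrightarrow> j < n \<Longrightarrow> cnj (x i) * 1\<^sub>m n $$ (i, j) * x j = (if i = j then cnj (x i) * x j else 0)"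
    by auto
  then show ?thesis unfolding bf_def by (auto intro!: sum.cong)
qed

lemma cnj_mult_self: "cnj z * z = complex_of_real ((cmod z)^2)"
  by (simp only: mult.commute[of "cnj z"] complex_mult_cnj cmod_power2)

lemma psd_one: "psd n (1\<^sub>m n)"
  unfolding psd_iff bf_one cnj_mult_self by (auto simp: sum_nonneg)

lemma psd_gram: "X \<in> carrier_mat k n \<Longrightarrow> psd n (adj X * X)"
  using psd_congr[OF psd_one, of X k n] by simp

lemma bf_add_mat: "A \<in> carrier_mat n n \<Longrightarrow> B \<in> carrier_mat n n \<Longrightarrow> bf n (A + B) x y = bf n A x y + bf n B x y"
  unfolding bf_def by (simp add: sum.distrib ring_distribs)

lemma bf_smult_mat: "A \<in> carrier_mat n n \<Longrightarrow> bf n (c \<cdot>\<^sub>m A) x y = c * bf n A x y"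
  unfolding bf_def by (simp add: sum_distrib_left ac_simps)

lemma psd_add: "psd n A \<Longrightarrow> psd n B \<Longrightarrow> psd n (A + B)"
  unfolding psd_iff by (auto simp: bf_add_mat)

lemma psd_smult: "psd n A \<Longrightarrow> 0 \<le> r \<Longrightarrow> psd n (complex_of_real r \<cdot>\<^sub>m A)"
  unfolding psd_iff by (auto simp: bf_smult_mat)

lemma bf_delta: "i < n \<Longrightarrow> j < n \<Longrightarrow> bf n A (\<lambda>l. if l = i then a else 0) (\<lambda>l. if l = j then b else 0) = cnj a * A $$ (i,j) * b"
  unfolding bf_def by simp

lemma bf_add_left: "bf n A (\<lambda>l. x l + y l) z = bf n A x z + bf n A y z"
  unfolding bf_def by (simp add: sum.distrib ring_distribs)

lemma bf_add_right: "bf n A z (\<lambda>l. x l + y l) = bf n A z x + bf n A z y"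
  unfolding bf_def by (simp add: sum.distrib ring_distribs)

lemma psd_diag_real: "psd n A \<Longrightarrow> i < n \<Longrightarrow> Im (A $$ (i,i)) = 0 \<and> 0 \<le> Re (A $$ (i,i))"
  using psdD(1,2)[of n A "\<lambda>l. if l = i then 1 else 0"] bf_delta[of i n i A 1 1] by auto

lemma psd_hermitian: assumes P: "psd n A" shows "adj A = A"
proof (rule eq_matI)
  have A: "A \<in> carrier_mat n n" using psdD(3)[OF P] .
  fix i j assume "i < dim_row A" "j < dim_col A"
  then have i: "i < n" and j: "j < n" using A by auto
  show "adj A $$ (i,j) = A $$ (i,j)"
  proof (cases "i = j")
    case True then show ?thesis using psd_diag_real[OF P i] i A by (simp add: complex_eq_iff)
  next
    case False
    define e :: "nat \<Rightarrow> complex \<Rightarrow> nat \<Rightarrow> complex" where "e = (\<lambda>k b l. if l = k then b else 0)"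
    have q: "bf n A (\<lambda>l. e i 1 l + e j b l) (\<lambda>l. e i 1 l + e j b l) = A$$(i,i) + A$$(i,j) * b + cnj b * A$$(j,i) + cnj b * A$$(j,j) * b" for b
      unfolding bf_add_left bf_add_right e_def using bf_delta i j by simp
    have r1: "Im (bf n A (\<lambda>l. e i 1 l + e j b l) (\<lambda>l. e i 1 l + e j b l)) = 0" for b using psdD(1)[OF P] .
    have dii: "Im (A$$(i,i)) = 0" and djj: "Im (A$$(j,j)) = 0" using psd_diag_real[OF P] i j by auto
    have a1: "Im (A$$(i,j) + A$$(j,i)) = 0" using r1[of 1] q[of 1] dii djj by simp
    have cnjii: "- (\<i> * z * \<i>) = z" for z by (simp add: algebra_simps)
    have a2: "Re (A$$(i,j) - A$$(j,i)) = 0" using r1[of "\<i>"] q[of "\<i>"] dii djj by (simp add: cnjii)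
    show ?thesis using a1 a2 i j A by (simp add: complex_eq_iff)
  qed
qed (use psdD(3)[OF assms] in auto)

lemma psd_trace: "psd n A \<Longrightarrow> Im (mtrace A) = 0 \<and> 0 \<le> Re (mtrace A)"
proof -
  assume P: "psd n A"
  have "dim_row A = n" using psdD(3)[OF P] by auto
  then show ?thesis
    unfolding mtrace_def using psd_diag_real[OF P] by (auto simp: Re_sum Im_sum intro!: sum_nonneg)
qed

lemma psd_trace_real: "psd n A \<Longrightarrow> mtrace A = complex_of_real (Re (mtrace A))"
  using psd_trace[of n A] by (simp add: complex_eq_iff)

lemma gram_zero: assumes X: "X \<in> carrier_mat k n" and z: "\<And>j. j < n \<Longrightarrow> (adj X * X) $$ (j,j) = 0"
  shows "X = 0\<^sub>m k n"
proof (rule eq_matI)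
  fix i j assume "i < dim_row (0\<^sub>m k n)" "j < dim_col (0\<^sub>m k n)"
  then have i: "i < k" and j: "j < n" by auto
  have "(adj X * X) $$ (j,j) = (\<Sum>l<k. complex_of_real ((cmod (X $$ (l,j)))^2))"
    using X j by (simp add: mult_idx cnj_mult_self)
  then have "(\<Sum>l<k. (cmod (X $$ (l,j)))^2) = 0" using z[OF j]
    by (metis of_real_eq_0_iff of_real_sum)
  then have "(cmod (X $$ (i,j)))^2 = 0" using i by (subst (asm) sum_nonneg_eq_0_iff) auto
  then show "X $$ (i,j) = 0\<^sub>m k n $$ (i,j)" using i j by simp
qed (use X in auto)

lemma msum_carrier[simp]: "msum r c N F \<in> carrier_mat r c" by (simp add: msum_def)
lemma msum_dims[simp]: "dim_row (msum r c N F) = r" "dim_col (msum r c N F) = c" by (auto simp: msum_def)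
lemma msum_idx[simp]: "i < r \<Longrightarrow> j < c \<Longrightarrow> msum r c N F $$ (i,j) = (\<Sum>k<N. F k $$ (i,j))"
  by (simp add: msum_def)

lemma msum_concat: "msum r c (N1+N2) F = msum r c N1 F + msum r c N2 (\<lambda>i. F (N1+i))"
  by (rule eq_matI) (auto simp: sum_lt_add)

lemma msum_smult: "(\<And>i. i < N \<Longrightarrow> F i \<in> carrier_mat r c) \<Longrightarrow> a \<cdot>\<^sub>m msum r c N F = msum r c N (\<lambda>i. a \<cdot>\<^sub>m F i)"
proof (rule eq_matI)
  assume F: "\<And>i. i < N \<Longrightarrow> F i \<in> carrier_mat r c"
  fix i j assume "i < dim_row (msum r c N (\<lambda>i. a \<cdot>\<^sub>m F i))" "j < dim_col (msum r c N (\<lambda>i. a \<cdot>\<^sub>m F i))"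
  then have i: "i < r" and j: "j < c" by auto
  have "(a \<cdot>\<^sub>m F k) $$ (i,j) = a * F k $$ (i,j)" if "k < N" for k using F[OF that] i j by auto
  then show "(a \<cdot>\<^sub>m msum r c N F) $$ (i, j) = msum r c N (\<lambda>i. a \<cdot>\<^sub>m F i) $$ (i, j)"
    using i j by (simp add: sum_distrib_left)
qed auto

lemma msum_mult_left: assumes X: "X \<in> carrier_mat r' r" and F: "\<And>i. i < N \<Longrightarrow> F i \<in> carrier_mat r c"
  shows "X * msum r c N F = msum r' c N (\<lambda>i. X * F i)"
proof (rule eq_matI)
  fix i j assume "i < dim_row (msum r' c N (\<lambda>i. X * F i))" "j < dim_col (msum r' c N (\<lambda>i. X * F i))"
  then have i: "i < r'" and j: "j < c" by auto
  have "(X * msum r c N F) $$ (i,j) = (\<Sum>l<r. X $$ (i,l) * (\<Sum>k<N. F k $$ (l,j)))"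
    using X i j by (simp add: mult_idx)
  also have "\<dots> = (\<Sum>k<N. \<Sum>l<r. X $$ (i,l) * F k $$ (l,j))"
    by (simp add: sum_distrib_left sum.swap[of _ "{..<r}"])
  also have "\<dots> = (\<Sum>k<N. (X * F k) $$ (i,j))"
    using X F i j by (intro sum.cong refl) (simp add: mult_idx[OF X F])
  finally show "(X * msum r c N F) $$ (i,j) = msum r' c N (\<lambda>i. X * F i) $$ (i,j)" using i j by simp
qed (use X in auto)

lemma msum_mult_right: assumes X: "X \<in> carrier_mat c c'" and F: "\<And>i. i < N \<Longrightarrow> F i \<in> carrier_mat r c"
  shows "msum r c N F * X = msum r c' N (\<lambda>i. F i * X)"
proof (rule eq_matI)
  fix i j assume "i < dim_row (msum r c' N (\<lambda>i. F i * X))" "j < dim_col (msum r c' N (\<lambda>i. F i * X))"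
  then have i: "i < r" and j: "j < c'" by auto
  have "(msum r c N F * X) $$ (i,j) = (\<Sum>l<c. (\<Sum>k<N. F k $$ (i,l)) * X $$ (l,j))"
    using X i j by (simp add: mult_idx)
  also have "\<dots> = (\<Sum>k<N. \<Sum>l<c. F k $$ (i,l) * X $$ (l,j))"
    by (simp add: sum_distrib_right sum.swap[of _ "{..<c}"])
  also have "\<dots> = (\<Sum>k<N. (F k * X) $$ (i,j))"
    using X F i j by (intro sum.cong refl) (simp add: mult_idx[OF F X])
  finally show "(msum r c N F * X) $$ (i,j) = msum r c' N (\<lambda>i. F i * X) $$ (i,j)" using i j by simp
qed (use X in auto)

lemma mtrace_msum: assumes F: "\<And>i. i < N \<Longrightarrow> F i \<in> carrier_mat r r"
  shows "mtrace (msum r r N F) = (\<Sum>i<N. mtrace (F i))"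
proof -
  have "mtrace (msum r r N F) = (\<Sum>k<N. \<Sum>i<r. F k $$ (i,i))"
    unfolding mtrace_def by (simp add: sum.swap[of _ "{..<r}"])
  also have "\<dots> = (\<Sum>i<N. mtrace (F i))" unfolding mtrace_def using F by (intro sum.cong refl) auto
  finally show ?thesis .
qed

definition diagm :: "nat \<Rightarrow> (nat \<Rightarrow> real) \<Rightarrow> complex mat" where
  "diagm n d = mat n n (\<lambda>(i,j). if i = j then complex_of_real (d i) else 0)"

lemma diagm_carrier[simp]: "diagm n d \<in> carrier_mat n n" by (simp add: diagm_def)
lemma diagm_dims[simp]: "dim_row (diagm n d) = n" "dim_col (diagm n d) = n" by (auto simp: diagm_def)

lemma diagm_mult_left: "B \<in> carrier_mat n m \<Longrightarrow> l < n \<Longrightarrow> j < m \<Longrightarrow> (diagm n d * B) $$ (l,j) = complex_of_real (d l) * B $$ (l,j)"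
  by (simp add: mult_idx diagm_def)

lemma diagm_mult: "diagm n d * diagm n e = diagm n (\<lambda>i. d i * e i)"
  by (rule eq_matI) (auto simp: diagm_mult_left, auto simp: diagm_def)

lemma adj_diagm[simp]: "adj (diagm n d) = diagm n d"
  by (rule eq_matI) (auto simp: diagm_def)

lemma udu_idx: "U \<in> carrier_mat n n \<Longrightarrow> i < n \<Longrightarrow> j < n \<Longrightarrow>
  (U * diagm n d * adj U) $$ (i,j) = (\<Sum>l<n. U $$ (i,l) * complex_of_real (d l) * cnj (U $$ (j,l)))"
proof -
  assume U: "U \<in> carrier_mat n n" and i: "i < n" and j: "j < n"
  have "(U * diagm n d * adj U) $$ (i,j) = (\<Sum>l<n. U $$ (i,l) * (diagm n d * adj U) $$ (l,j))"
    using U i j by (simp add: mult_idx[of U n n "diagm n d * adj U" n i j])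
  also have "\<dots> = (\<Sum>l<n. U $$ (i,l) * complex_of_real (d l) * cnj (U $$ (j,l)))"
    using U i j by (intro sum.cong refl) (subst diagm_mult_left[of "adj U" n n], auto)
  finally show ?thesis .
qed

lemma unitary_mult: "unitary n U \<Longrightarrow> unitary n V \<Longrightarrow> unitary n (U * V)"
  unfolding unitary_def
  by (auto simp: adj_mult)

lemma unitary_adj: "unitary n U \<Longrightarrow> unitary n (adj U)"
  unfolding unitary_def by auto

lemma udu_mult: assumes U: "unitary n U"
  shows "(U * diagm n d * adj U) * (U * diagm n e * adj U) = U * diagm n (\<lambda>i. d i * e i) * adj U"
proof -
  have C: "U \<in> carrier_mat n n" "adj U * U = 1\<^sub>m n" using U unfolding unitary_def by auto
  have "(U * diagm n d * adj U) * (U * diagm n e * adj U) = U * diagm n d * (adj U * U) * diagm n e * adj U"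
    using C by simp
  also have "\<dots> = U * diagm n (\<lambda>i. d i * e i) * adj U"
    using C by (simp add: diagm_mult[symmetric])
  finally show ?thesis .
qed


section \<open>Spectral theorem\<close>


lemma hermitian_entry: "adj A = A \<Longrightarrow> A \<in> carrier_mat n n \<Longrightarrow> i < n \<Longrightarrow> j < n \<Longrightarrow> A $$ (j,i) = cnj (A $$ (i,j))"
  by (metis adj_idx carrier_matD(1) carrier_matD(2))

lemma unitary_entries: assumes U: "unitary n U" and i: "i < n" and j: "j < n"
  shows "(\<Sum>l<n. cnj (U $$ (l,i)) * U $$ (l,j)) = (if i = j then 1 else 0)"
    "(\<Sum>l<n. U $$ (i,l) * cnj (U $$ (j,l))) = (if i = j then 1 else 0)"
proof -
  have C: "U \<in> carrier_mat n n" "adj U * U = 1\<^sub>m n" "U * adj U = 1\<^sub>m n" using U unfolding unitary_def by auto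
  have "(\<Sum>l<n. cnj (U $$ (l,i)) * U $$ (l,j)) = (adj U * U) $$ (i,j)" using C(1) i j by (simp add: mult_idx)
  also have "\<dots> = 1\<^sub>m n $$ (i,j)" by (subst C(2)) (rule refl)
  finally show "(\<Sum>l<n. cnj (U $$ (l,i)) * U $$ (l,j)) = (if i = j then 1 else 0)" using i j by simp
  have "(\<Sum>l<n. U $$ (i,l) * cnj (U $$ (j,l))) = (U * adj U) $$ (i,j)" using C(1) i j by (simp add: mult_idx)
  also have "\<dots> = 1\<^sub>m n $$ (i,j)" by (subst C(3)) (rule refl)
  finally show "(\<Sum>l<n. U $$ (i,l) * cnj (U $$ (j,l))) = (if i = j then 1 else 0)" using i j by simp
qed

lemma unitaryI: assumes C: "U \<in> carrier_mat n n"
  and e1: "\<And>i j. i < n \<Longrightarrow> j < n \<Longrightarrow> (\<Sum>l<n. cnj (U $$ (l,i)) * U $$ (l,j)) = (if i = j then 1 else 0)"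
  and e2: "\<And>i j. i < n \<Longrightarrow> j < n \<Longrightarrow> (\<Sum>l<n. U $$ (i,l) * cnj (U $$ (j,l))) = (if i = j then 1 else 0)"
  shows "unitary n U"
  unfolding unitary_def
proof (intro conjI C)
  show "adj U * U = 1\<^sub>m n" by (rule eq_matI) (use C e1 in \<open>auto simp: mult_idx\<close>)
  show "U * adj U = 1\<^sub>m n" by (rule eq_matI) (use C e2 in \<open>auto simp: mult_idx\<close>)
qed

lemma eigen_exists:
  assumes A: "(A::complex mat) \<in> carrier_mat n n" and n: "0 < n"
  shows "\<exists>lam v. (\<exists>i<n. v i \<noteq> 0) \<and> (\<forall>i<n. (\<Sum>j<n. A $$ (i,j) * v j) = lam * v i)"
proof -
  obtain lam where "lam \<in> spectrum A" using spectrum_non_empty[OF A n] by blast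
  then obtain w where w: "eigenvector A w lam" unfolding spectrum_def eigenvalue_def by auto
  have wc: "w \<in> carrier_vec n" and w0: "w \<noteq> 0\<^sub>v n" and ev: "A *\<^sub>v w = lam \<cdot>\<^sub>v w"
    using w A unfolding eigenvector_def by auto
  have "\<exists>i<n. w $ i \<noteq> 0"
  proof (rule ccontr)
    assume "\<not> (\<exists>i<n. w $ i \<noteq> 0)"
    then have "w = 0\<^sub>v n" using wc by (intro eq_vecI) auto
    with w0 show False by simp
  qed
  moreover have "(\<Sum>j<n. A $$ (i,j) * w $ j) = lam * w $ i" if i: "i < n" for i
  proof -
    have "(A *\<^sub>v w) $ i = (lam \<cdot>\<^sub>v w) $ i" using ev by simp
    then show ?thesis using i A wc by (simp add: scalar_prod_def atLeast0LessThan)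
  qed
  ultimately show ?thesis by blast
qed

lemma sum_cmod_cnj: "(\<Sum>i<n. cnj (u i) * u i) = complex_of_real (\<Sum>i<n. (cmod (u i))^2)"
  by (simp add: cnj_mult_self)

lemma unit_eigen:
  assumes A: "A \<in> carrier_mat n n" and n: "0 < n"
  shows "\<exists>lam u. (\<Sum>i<n. cnj (u i) * u i) = 1 \<and> (\<forall>i<n. (\<Sum>j<n. A $$ (i,j) * u j) = lam * u i)"
proof -
  obtain lam v where nz: "\<exists>i<n. v i \<noteq> 0" and ev: "\<forall>i<n. (\<Sum>j<n. A $$ (i,j) * v j) = lam * v i"
    using eigen_exists[OF A n] by blast
  define S where "S = (\<Sum>i<n. (cmod (v i))^2)"
  obtain i0 where i0: "i0 < n" "v i0 \<noteq> 0" using nz by blast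
  have "0 < (cmod (v i0))^2" using i0 by simp
  also have "\<dots> \<le> S" unfolding S_def using i0 by (intro member_le_sum) auto
  finally have S: "0 < S" .
  define s where "s = sqrt S"
  have s: "0 < s" "s^2 = S" using S unfolding s_def by auto
  define u where "u = (\<lambda>i. v i / complex_of_real s)"
  have "(\<Sum>i<n. cnj (u i) * u i) = complex_of_real (\<Sum>i<n. (cmod (v i))^2 / s^2)"
    unfolding sum_cmod_cnj u_def by (simp add: norm_divide power_divide)
  also have "(\<Sum>i<n. (cmod (v i))^2 / s^2) = 1" using s S by (simp add: sum_divide_distrib[symmetric] S_def)
  then have "complex_of_real (\<Sum>i<n. (cmod (v i))^2 / s^2) = 1" by simp
  finally have u1: "(\<Sum>i<n. cnj (u i) * u i) = 1" .
  have "(\<Sum>j<n. A $$ (i,j) * u j) = lam * u i" if "i < n" for i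
    using ev that unfolding u_def by (simp add: sum_divide_distrib[symmetric] times_divide_eq_right)
  with u1 show ?thesis by blast
qed

lemma householder:
  assumes n: "0 < n" and u: "(\<Sum>i<n. cnj (u i) * u i) = 1"
  shows "\<exists>H \<beta>. unitary n H \<and> \<beta> \<noteq> 0 \<and> (\<forall>i<n. H $$ (i,0) = \<beta> * u i)"
proof -
  have S1: "(\<Sum>i<n. (cmod (u i))^2) = 1" using u unfolding sum_cmod_cnj by (simp only: of_real_eq_1_iff)
  define r where "r = cmod (u 0)"
  have r0: "0 \<le> r" unfolding r_def by simp
  have "r^2 \<le> 1" unfolding r_def S1[symmetric] using n by (intro member_le_sum) auto
  then have r1: "r \<le> 1" using r0 by (simp add: power_le_one_iff)
  define \<alpha> where "\<alpha> = (if u 0 = 0 then 1 else u 0 / complex_of_real r)"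
  have aa: "cnj \<alpha> * \<alpha> = 1"
    unfolding \<alpha>_def r_def by (auto simp: cnj_mult_self norm_divide)
  have u0: "u 0 = complex_of_real r * \<alpha>"
    unfolding \<alpha>_def r_def by auto
  define w where "w = (\<lambda>i. u i - (if i = 0 then \<alpha> else 0))"
  define c where "c = (\<Sum>i<n. cnj (w i) * w i)"
  have wi: "cnj (w i) * w i = cnj (u i) * u i - (if i = 0 then cnj (u 0) * \<alpha> + cnj \<alpha> * u 0 - cnj \<alpha> * \<alpha> else 0)" for i
    unfolding w_def by (auto simp: algebra_simps)
  have cu0: "cnj (u 0) * \<alpha> = complex_of_real r" "cnj \<alpha> * u 0 = complex_of_real r"
    unfolding u0 using aa by (auto simp: ac_simps)
  have c: "c = complex_of_real (2 - 2 * r)"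
    unfolding c_def wi sum_subtractf using n u by (simp add: cu0 aa)
  define \<kappa> where "\<kappa> = 2 / c"
  have kk: "\<kappa> * \<kappa> * c = 2 * \<kappa>"
    unfolding \<kappa>_def by (cases "c = 0") (auto simp: field_simps power2_eq_square)
  have ck: "cnj \<kappa> = \<kappa>" unfolding \<kappa>_def c by simp
  define H where "H = mat n n (\<lambda>(i,j). (if i = j then 1 else 0) - \<kappa> * w i * cnj (w j))"
  have Hc: "H \<in> carrier_mat n n" unfolding H_def by simp
  have Hh: "adj H = H" by (rule eq_matI) (auto simp: H_def ck)
  have HH: "H * H = 1\<^sub>m n"
  proof (rule eq_matI)
    fix i j assume "i < dim_row (1\<^sub>m n)" "j < dim_col (1\<^sub>m n)"
    then have i: "i < n" and j: "j < n" by auto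
    have e: "((if i = l then 1 else 0) - \<kappa> * w i * cnj (w l)) * ((if l = j then 1 else 0) - \<kappa> * w l * cnj (w j))
      = (if i = l then (if l = j then 1 else 0) else 0) - (if i = l then \<kappa> * w l * cnj (w j) else 0)
        - (if l = j then \<kappa> * w i * cnj (w l) else 0) + \<kappa> * \<kappa> * w i * cnj (w j) * (cnj (w l) * w l)" for l
      by (auto simp: algebra_simps)
    have "(H * H) $$ (i,j) = (\<Sum>l<n. ((if i = l then 1 else 0) - \<kappa> * w i * cnj (w l)) * ((if l = j then 1 else 0) - \<kappa> * w l * cnj (w j)))"
      using i j Hc by (simp add: mult_idx H_def)
    also have "\<dots> = (if i = j then 1 else 0) - \<kappa> * w i * cnj (w j) - \<kappa> * w i * cnj (w j) + \<kappa> * \<kappa> * w i * cnj (w j) * c"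
      unfolding e using i j by (simp add: sum.distrib sum_subtractf sum_distrib_left c_def)
    also have "\<dots> = (if i = j then 1 else 0) - \<kappa> * w i * cnj (w j) - \<kappa> * w i * cnj (w j) + 2 * \<kappa> * (w i * cnj (w j))"
    proof -
      have eq: "\<kappa> * \<kappa> * w i * cnj (w j) * c = 2 * \<kappa> * (w i * cnj (w j))"
      proof -
        have "\<kappa> * \<kappa> * w i * cnj (w j) * c = (\<kappa> * \<kappa> * c) * (w i * cnj (w j))" by (simp only: mult_ac)
        then show ?thesis using kk by simp
      qed
      show ?thesis by (subst eq) (rule refl)
    qed
    also have "\<dots> = (if i = j then 1 else 0)" by (simp add: algebra_simps)
    finally show "(H * H) $$ (i,j) = 1\<^sub>m n $$ (i,j)" using i j by simp
  qed (auto simp: H_def)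
  have unit: "unitary n H" unfolding unitary_def using Hc Hh HH by simp
  have col: "H $$ (i,0) = cnj \<alpha> * u i" if i: "i < n" for i
  proof (cases "c = 0")
    case True
    then have r1': "r = 1" using c by simp
    have "\<kappa> = 0" unfolding \<kappa>_def True by simp
    then have Hi: "H $$ (i,0) = (if i = 0 then 1 else 0)" using i n unfolding H_def by simp
    show ?thesis
    proof (cases "i = 0")
      case True then show ?thesis using Hi u0 r1' aa by (simp add: ac_simps)
    next
      case False
      have "(\<Sum>i<n. (cmod (u i))^2) = (cmod (u 0))^2 + (\<Sum>i\<in>{..<n} - {0}. (cmod (u i))^2)"
        using n by (subst sum.remove[of _ 0]) auto
      then have "(\<Sum>i\<in>{..<n} - {0}. (cmod (u i))^2) = 0" using S1 r1' unfolding r_def by simp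
      then have "(cmod (u i))^2 = 0" using i False by (subst (asm) sum_nonneg_eq_0_iff) auto
      then show ?thesis using Hi False by simp
    qed
  next
    case False
    have r1': "r \<noteq> 1" using False c by auto
    have w0: "cnj (w 0) = complex_of_real (r - 1) * cnj \<alpha>"
      unfolding w_def using u0 by (simp add: algebra_simps)
    have "\<kappa> * cnj (w 0) = - cnj \<alpha>"
      unfolding \<kappa>_def c w0 using r1' by (simp add: field_simps)
    moreover have "\<kappa> * w i * cnj (w 0) = w i * (\<kappa> * cnj (w 0))" by (simp only: mult_ac)
    moreover have "H $$ (i,0) = (if i = 0 then 1 else 0) - \<kappa> * w i * cnj (w 0)"
      using i n unfolding H_def by simp
    ultimately have "H $$ (i,0) = (if i = 0 then 1 else 0) + w i * cnj \<alpha>" by simp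
    also have "\<dots> = cnj \<alpha> * u i" unfolding w_def using aa by (auto simp: algebra_simps)
    finally show ?thesis .
  qed
  have "cnj \<alpha> \<noteq> 0" using aa by auto
  then show ?thesis using unit col by blast
qed


lemma mat0_eq: "A \<in> carrier_mat 0 0 \<Longrightarrow> B \<in> carrier_mat 0 0 \<Longrightarrow> A = B"
  by (rule eq_matI) auto

lemma spectral_aux:
  "\<forall>A. A \<in> carrier_mat n n \<longrightarrow> adj A = A \<longrightarrow> (\<exists>U d. unitary n U \<and> A = U * diagm n d * adj U)"
proof (induction n)
  case 0
  show ?case
  proof (intro allI impI)
    fix A :: "complex mat" assume A: "A \<in> carrier_mat 0 0"
    have "unitary 0 (1\<^sub>m 0)" unfolding unitary_def by simp
    moreover have "A = 1\<^sub>m 0 * diagm 0 (\<lambda>_. 0) * adj (1\<^sub>m 0)" by (rule mat0_eq[OF A]) simp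
    ultimately show "\<exists>U d. unitary 0 U \<and> A = U * diagm 0 d * adj U" by blast
  qed
next
  case (Suc k)
  show ?case
  proof (intro allI impI)
    fix A :: "complex mat" assume A: "A \<in> carrier_mat (Suc k) (Suc k)" and h: "adj A = A"
    define n where "n = Suc k"
    have n: "0 < n" unfolding n_def by simp
    have A': "A \<in> carrier_mat n n" using A unfolding n_def .
    obtain lam u where u: "(\<Sum>i<n. cnj (u i) * u i) = 1" and ev: "\<forall>i<n. (\<Sum>j<n. A $$ (i,j) * u j) = lam * u i"
      using unit_eigen[OF A' n] by blast
    obtain H \<beta> where H: "unitary n H" and \<beta>: "\<beta> \<noteq> 0" and col: "\<forall>i<n. H $$ (i,0) = \<beta> * u i"
      using householder[OF n u] by blast
    have Hc: "H \<in> carrier_mat n n" "adj H * H = 1\<^sub>m n" "H * adj H = 1\<^sub>m n" using H unfolding unitary_def by auto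
    define B where "B = adj H * A * H"
    have Bc: "B \<in> carrier_mat n n" unfolding B_def using Hc(1) A' by (meson adj_carrier mult_carrier_mat)
    have Bh: "adj B = B" unfolding B_def using Hc A' h by (simp add: adj_mult[of _ n n _ n])
    have AH: "(A * H) $$ (l,0) = lam * H $$ (l,0)" if l: "l < n" for l
    proof -
      have "(A * H) $$ (l,0) = (\<Sum>m<n. A $$ (l,m) * H $$ (m,0))" using l n A' Hc by (simp add: mult_idx)
      also have "\<dots> = \<beta> * (\<Sum>m<n. A $$ (l,m) * u m)" using col by (simp add: sum_distrib_left ac_simps)
      also have "\<dots> = lam * H $$ (l,0)" using ev col l by simp
      finally show ?thesis .
    qed
    have B0: "B $$ (i,0) = (if i = 0 then lam else 0)" if i: "i < n" for i
    proof -
      have "B $$ (i,0) = (adj H * (A * H)) $$ (i,0)" unfolding B_def using Hc A' by simp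
      also have "\<dots> = (\<Sum>l<n. adj H $$ (i,l) * (A * H) $$ (l,0))"
        by (rule mult_idx[of "adj H" n n "A * H" n]) (use Hc A' i n in \<open>auto intro: mult_carrier_mat\<close>)
      also have "\<dots> = (\<Sum>l<n. cnj (H $$ (l,i)) * (A * H) $$ (l,0))"
        using Hc i by (intro sum.cong refl) auto
      also have "\<dots> = lam * (\<Sum>l<n. cnj (H $$ (l,i)) * H $$ (l,0))"
        using AH by (simp add: sum_distrib_left ac_simps)
      also have "\<dots> = lam * (if i = 0 then 1 else 0)" using unitary_entries(1)[OF H i n] by simp
      finally show ?thesis by simp
    qed
    have lamr: "lam = complex_of_real (Re lam)"
    proof -
      have "B $$ (0,0) = cnj (B $$ (0,0))" using hermitian_entry[OF Bh Bc n n] .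
      then show ?thesis using B0[OF n] by (simp add: complex_eq_iff)
    qed
    have B0': "B $$ (0,j) = (if j = 0 then lam else 0)" if j: "j < n" for j
      using hermitian_entry[OF Bh Bc j n] B0[OF j] lamr by (auto simp: complex_eq_iff)
    define A1 where "A1 = mat k k (\<lambda>(i,j). B $$ (Suc i, Suc j))"
    have A1c: "A1 \<in> carrier_mat k k" unfolding A1_def by simp
    have A1h: "adj A1 = A1"
    proof (rule eq_matI)
      fix i j assume "i < dim_row A1" "j < dim_col A1"
      then have i: "i < k" and j: "j < k" unfolding A1_def by auto
      then show "adj A1 $$ (i,j) = A1 $$ (i,j)"
        using hermitian_entry[OF Bh Bc, of "Suc j" "Suc i"] unfolding A1_def n_def by simp
    qed (auto simp: A1_def)
    obtain U' d' where U': "unitary k U'" and A1eq: "A1 = U' * diagm k d' * adj U'"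
      using Suc.IH A1c A1h by blast
    have U'c: "U' \<in> carrier_mat k k" using U' unfolding unitary_def by auto
    define G where "G = mat n n (\<lambda>(i,j). if i = 0 \<and> j = 0 then 1 else if i = 0 \<or> j = 0 then 0 else U' $$ (i - 1, j - 1))"
    define d where "d = (\<lambda>i. if i = 0 then Re lam else d' (i - 1))"
    have Gc: "G \<in> carrier_mat n n" unfolding G_def by simp
    have G: "unitary n G"
    proof (rule unitaryI[OF Gc])
      fix i j assume i: "i < n" and j: "j < n"
      show "(\<Sum>l<n. cnj (G $$ (l,i)) * G $$ (l,j)) = (if i = j then 1 else 0)"
      proof -
        have "(\<Sum>l<n. cnj (G $$ (l,i)) * G $$ (l,j)) = cnj (G $$ (0,i)) * G $$ (0,j) + (\<Sum>l<k. cnj (G $$ (Suc l,i)) * G $$ (Suc l,j))"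
          unfolding n_def by (rule sum.lessThan_Suc_shift)
        also have "\<dots> = (if i = j then 1 else 0)"
          using i j unitary_entries(1)[OF U', of "i - 1" "j - 1"]
          by (cases i; cases j) (auto simp: G_def n_def)
        finally show ?thesis .
      qed
      show "(\<Sum>l<n. G $$ (i,l) * cnj (G $$ (j,l))) = (if i = j then 1 else 0)"
      proof -
        have "(\<Sum>l<n. G $$ (i,l) * cnj (G $$ (j,l))) = G $$ (i,0) * cnj (G $$ (j,0)) + (\<Sum>l<k. G $$ (i,Suc l) * cnj (G $$ (j,Suc l)))"
          unfolding n_def by (rule sum.lessThan_Suc_shift)
        also have "\<dots> = (if i = j then 1 else 0)"
          using i j unitary_entries(2)[OF U', of "i - 1" "j - 1"]
          by (cases i; cases j) (auto simp: G_def n_def)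
        finally show ?thesis .
      qed
    qed
    have BG: "B = G * diagm n d * adj G"
    proof (rule eq_matI)
      fix i j assume "i < dim_row (G * diagm n d * adj G)" "j < dim_col (G * diagm n d * adj G)"
      then have i: "i < n" and j: "j < n" using Gc by auto
      have "(G * diagm n d * adj G) $$ (i,j) = (\<Sum>l<n. G $$ (i,l) * complex_of_real (d l) * cnj (G $$ (j,l)))"
        using udu_idx[OF Gc i j] .
      also have "\<dots> = G $$ (i,0) * complex_of_real (d 0) * cnj (G $$ (j,0)) + (\<Sum>l<k. G $$ (i,Suc l) * complex_of_real (d (Suc l)) * cnj (G $$ (j,Suc l)))"
        unfolding n_def by (rule sum.lessThan_Suc_shift)
      also have "\<dots> = B $$ (i,j)"
      proof (cases i)
        case 0
        then show ?thesis using B0'[OF j] lamr j by (cases j) (auto simp: G_def d_def n_def)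
      next
        case (Suc i')
        note i' = this
        show ?thesis
        proof (cases j)
          case 0
          then show ?thesis using B0[OF i] i' i j by (auto simp: G_def d_def n_def)
        next
          case (Suc j')
          have ij: "i' < k" "j' < k" using i j i' Suc unfolding n_def by auto
          have "(\<Sum>l<k. G $$ (i,Suc l) * complex_of_real (d (Suc l)) * cnj (G $$ (j,Suc l)))
              = (\<Sum>l<k. U' $$ (i',l) * complex_of_real (d' l) * cnj (U' $$ (j',l)))"
            using i j i' Suc by (intro sum.cong refl) (auto simp: G_def d_def n_def)
          also have "\<dots> = A1 $$ (i',j')" using udu_idx[OF U'c ij, of d'] A1eq by simp
          also have "\<dots> = B $$ (i,j)" using ij i' Suc unfolding A1_def by simp
          finally show ?thesis using i' Suc i j by (simp add: G_def n_def)
        qed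
      qed
      finally show "B $$ (i,j) = (G * diagm n d * adj G) $$ (i,j)" by simp
    qed (use Gc Bc in auto)
    have "A = H * B * adj H" unfolding B_def using Hc A' by simp
    also have "\<dots> = (H * G) * diagm n d * adj (H * G)"
      unfolding BG using Hc Gc by (simp add: adj_mult[of _ n n _ n])
    finally have "A = (H * G) * diagm n d * adj (H * G)" .
    moreover have "unitary n (H * G)" using unitary_mult[OF H G] .
    ultimately show "\<exists>U d. unitary (Suc k) U \<and> A = U * diagm (Suc k) d * adj U" unfolding n_def by blast
  qed
qed

lemma spectral: "A \<in> carrier_mat n n \<Longrightarrow> adj A = A \<Longrightarrow> \<exists>U d. unitary n U \<and> A = U * diagm n d * adj U"
  using spectral_aux by blast

lemma unitary_conj_udu: assumes U: "unitary n U" shows "adj U * (U * diagm n d * adj U) * U = diagm n d"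
proof -
  have C: "U \<in> carrier_mat n n" "adj U * U = 1\<^sub>m n" "U * adj U = 1\<^sub>m n" using U unfolding unitary_def by auto
  then show ?thesis by simp
qed

lemma spectral_psd: assumes P: "psd n A"
  shows "\<exists>U d. unitary n U \<and> (\<forall>i<n. 0 \<le> d i) \<and> A = U * diagm n d * adj U"
proof -
  have A: "A \<in> carrier_mat n n" using psdD(3)[OF P] .
  obtain U d where U: "unitary n U" and Ad: "A = U * diagm n d * adj U"
    using spectral[OF A psd_hermitian[OF P]] by blast
  have Uc: "U \<in> carrier_mat n n" using U unfolding unitary_def by auto
  have "psd n (adj U * A * U)" using psd_congr[OF P Uc] .
  then have Pd: "psd n (diagm n d)" using unitary_conj_udu[OF U, of d] Ad by simp
  have "0 \<le> d i" if "i < n" for i using psd_diag_real[OF Pd that] that by (simp add: diagm_def)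
  then show ?thesis using U Ad by blast
qed


lemma mult_minus': "dim_col (A::complex mat) = dim_row B \<Longrightarrow> dim_row B = dim_row C \<Longrightarrow> dim_col B = dim_col C \<Longrightarrow> A * (B - C) = A * B - A * C"
  by (rule mult_minus_distrib_mat[of A "dim_row A" "dim_col A" B "dim_col B" C]) auto

lemma minus_mult': "dim_row (A::complex mat) = dim_row B \<Longrightarrow> dim_col A = dim_col B \<Longrightarrow> dim_col A = dim_row C \<Longrightarrow> (A - B) * C = A * C - B * C"
  by (rule minus_mult_distrib_mat[of A "dim_row A" "dim_col A" B C "dim_col C"]) auto

lemma mult_add': "dim_col (A::complex mat) = dim_row B \<Longrightarrow> dim_row B = dim_row C \<Longrightarrow> dim_col B = dim_col C \<Longrightarrow> A * (B + C) = A * B + A * C"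
  by (rule mult_add_distrib_mat[of A "dim_row A" "dim_col A" B "dim_col B" C]) auto

lemma add_mult': "dim_row (A::complex mat) = dim_row B \<Longrightarrow> dim_col A = dim_col B \<Longrightarrow> dim_col A = dim_row C \<Longrightarrow> (A + B) * C = A * C + B * C"
  by (rule add_mult_distrib_mat[of A "dim_row A" "dim_col A" B C "dim_col C"]) auto

lemma mult_smult': "dim_col (A::complex mat) = dim_row B \<Longrightarrow> A * (k \<cdot>\<^sub>m B) = k \<cdot>\<^sub>m (A * B)"
  by (rule mult_smult_distrib[of A "dim_row A" "dim_col A" B "dim_col B"]) auto

lemma smult_mult': "dim_col (A::complex mat) = dim_row B \<Longrightarrow> (k \<cdot>\<^sub>m A) * B = k \<cdot>\<^sub>m (A * B)"
  by (rule mult_smult_assoc_mat[of A "dim_row A" "dim_col A" B "dim_col B"]) auto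

lemma adj_mult'[simp]: "dim_col A = dim_row B \<Longrightarrow> adj (A * B) = adj B * adj A"
  by (rule adj_mult[of A "dim_row A" "dim_col A" B "dim_col B"]) auto

lemma mult_carrier'[simp]: "dim_row A = r \<Longrightarrow> dim_col B = c \<Longrightarrow> A * B \<in> carrier_mat r c"
  by auto

lemma smult_smult': "a \<cdot>\<^sub>m (b \<cdot>\<^sub>m (A::complex mat)) = (a * b) \<cdot>\<^sub>m A"
  by (rule eq_matI) auto

lemma diagm_cong: "(\<And>i. i < n \<Longrightarrow> d i = e i) \<Longrightarrow> diagm n d = diagm n e"
  by (rule eq_matI) (auto simp: diagm_def)

lemma unitaryD: "unitary n U \<Longrightarrow> U \<in> carrier_mat n n" "unitary n U \<Longrightarrow> adj U * U = 1\<^sub>m n"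
  "unitary n U \<Longrightarrow> U * adj U = 1\<^sub>m n"
  unfolding unitary_def by auto

lemma mult_diagm_right: "X \<in> carrier_mat m n \<Longrightarrow> i < m \<Longrightarrow> j < n \<Longrightarrow> (X * diagm n d) $$ (i,j) = X $$ (i,j) * complex_of_real (d j)"
  by (simp add: mult_idx diagm_def)

lemma mult_diagm_right': "dim_col X = n \<Longrightarrow> i < dim_row X \<Longrightarrow> j < n \<Longrightarrow> (X * diagm n d) $$ (i,j) = X $$ (i,j) * complex_of_real (d j)"
  by (rule mult_diagm_right[of X "dim_row X" n]) auto

lemma adj_udu: "U \<in> carrier_mat n n \<Longrightarrow> adj (U * diagm n d * adj U) = U * diagm n d * adj U"
  by simp

lemma udu_zero: "U \<in> carrier_mat n n \<Longrightarrow> U * diagm n (\<lambda>_. 0) * adj U = 0\<^sub>m n n"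
proof -
  assume U: "U \<in> carrier_mat n n"
  have "diagm n (\<lambda>_. 0) = 0\<^sub>m n n" by (rule eq_matI) (auto simp: diagm_def)
  then show ?thesis using U by simp
qed

lemma psd_diagm: assumes d: "\<And>i. i < n \<Longrightarrow> 0 \<le> d i" shows "psd n (diagm n d)"
proof -
  have "adj (diagm n (\<lambda>i. sqrt (d i))) * diagm n (\<lambda>i. sqrt (d i)) = diagm n d"
    using d by (simp add: diagm_mult) (rule diagm_cong, simp)
  then show ?thesis using psd_gram[of "diagm n (\<lambda>i. sqrt (d i))" n n] by simp
qed

lemma psd_udu: assumes U: "unitary n U" and d: "\<And>i. i < n \<Longrightarrow> 0 \<le> d i"
  shows "psd n (U * diagm n d * adj U)"
proof -
  have Uc: "U \<in> carrier_mat n n" using unitaryD(1)[OF U] .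
  have Dp: "psd n (diagm n d)" using psd_diagm d by blast
  have "psd n (adj (adj U) * diagm n d * adj U)" using psd_congr[OF Dp, where X="adj U" and n=n] Uc by simp
  then show ?thesis by simp
qed

section \<open>Square roots\<close>

lemma psd_sqrt_exists: assumes A: "psd n A" shows "\<exists>R. psd n R \<and> R * R = A"
proof -
  obtain U d where U: "unitary n U" and d: "\<forall>i<n. 0 \<le> d i" and Ad: "A = U * diagm n d * adj U"
    using spectral_psd[OF A] by blast
  define R where "R = U * diagm n (\<lambda>i. sqrt (d i)) * adj U"
  have "psd n R" unfolding R_def by (rule psd_udu[OF U]) (use d in simp)
  moreover have "R * R = U * diagm n (\<lambda>i. sqrt (d i) * sqrt (d i)) * adj U"
    unfolding R_def by (rule udu_mult[OF U])
  moreover have "diagm n (\<lambda>i. sqrt (d i) * sqrt (d i)) = diagm n d"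
    using d by (intro diagm_cong) simp
  ultimately show ?thesis using Ad by auto
qed

lemma psd_sqrt_unique:
  assumes P: "psd n P" and Q: "psd n Q" and PQ: "P * P = Q * Q"
  shows "P = Q"
proof -
  obtain U d where U: "unitary n U" and d: "\<forall>i<n. 0 \<le> d i" and Pd: "P = U * diagm n d * adj U"
    using spectral_psd[OF P] by blast
  have Uc: "U \<in> carrier_mat n n" "adj U * U = 1\<^sub>m n" "U * adj U = 1\<^sub>m n" using unitaryD[OF U] by auto
  have Qc: "Q \<in> carrier_mat n n" using psdD(3)[OF Q] .
  have Qh: "adj Q = Q" using psd_hermitian[OF Q] .
  define D where "D = diagm n d"
  have Dc: "D \<in> carrier_mat n n" unfolding D_def by simp
  have PPU: "Q * Q * U = U * diagm n (\<lambda>i. d i * d i)"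
  proof -
    have "Q * Q * U = P * P * U" using PQ by simp
    also have "\<dots> = U * diagm n (\<lambda>i. d i * d i) * adj U * U" unfolding Pd udu_mult[OF U] by simp
    also have "\<dots> = U * diagm n (\<lambda>i. d i * d i)" using Uc by simp
    finally show ?thesis .
  qed
  define Y where "Y = Q * U - U * D"
  have Yc: "Y \<in> carrier_mat n n" unfolding Y_def using Qc Uc Dc by auto
  have QY: "Q * Y = Q * Q * U - Q * U * D"
    unfolding Y_def using Qc Uc Dc by (simp add: mult_minus')
  have Ye: "Y $$ (l,j) = (Q * U) $$ (l,j) - U $$ (l,j) * complex_of_real (d j)" if "l < n" "j < n" for l j
    unfolding Y_def D_def using that Qc Uc by (simp add: mult_diagm_right del: mult_idx2)
  have QYe: "(Q * Y) $$ (l,j) = - (Y $$ (l,j) * complex_of_real (d j))" if lj: "l < n" "j < n" for l j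
  proof -
    have "(Q * Y) $$ (l,j) = (U * diagm n (\<lambda>i. d i * d i)) $$ (l,j) - (Q * U * D) $$ (l,j)"
      unfolding QY PPU using lj Qc Uc Dc by simp
    also have "\<dots> = U $$ (l,j) * complex_of_real (d j * d j) - (Q * U) $$ (l,j) * complex_of_real (d j)"
      unfolding D_def using lj Qc Uc by (simp add: mult_diagm_right' del: massoc mult_idx2)
    also have "\<dots> = - (Y $$ (l,j) * complex_of_real (d j))" unfolding Ye[OF lj] by (simp add: algebra_simps)
    finally show ?thesis .
  qed
  have adjQU: "adj (Q * U) * Y = adj U * (Q * Y)"
    using Qc Uc Yc Qh by (simp add: adj_mult[of _ n n _ n])
  have G1: "(adj Y * Y) $$ (j,j) = - 2 * complex_of_real (d j) * (adj U * Y) $$ (j,j)" if j: "j < n" for j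
  proof -
    have "(adj Y * Y) $$ (j,j) = (\<Sum>l<n. cnj (Y $$ (l,j)) * Y $$ (l,j))" using Yc j by (simp add: mult_idx)
    also have "\<dots> = (\<Sum>l<n. cnj ((Q * U) $$ (l,j)) * Y $$ (l,j)) - complex_of_real (d j) * (\<Sum>l<n. cnj (U $$ (l,j)) * Y $$ (l,j))"
      using j by (simp add: Ye sum_subtractf sum_distrib_left algebra_simps)
    also have "(\<Sum>l<n. cnj ((Q * U) $$ (l,j)) * Y $$ (l,j)) = (adj (Q * U) * Y) $$ (j,j)"
      using Yc Qc Uc j by (subst mult_idx[of "adj (Q*U)" n n Y n]) (auto simp del: adj_mult' mult_idx2)
    also have "\<dots> = (adj U * (Q * Y)) $$ (j,j)" using adjQU by simp
    also have "\<dots> = (\<Sum>l<n. cnj (U $$ (l,j)) * (Q * Y) $$ (l,j))"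
      using Yc Qc Uc j by (subst mult_idx[of _ n n _ n]) auto
    also have "\<dots> = - complex_of_real (d j) * (\<Sum>l<n. cnj (U $$ (l,j)) * Y $$ (l,j))"
      using j by (simp add: QYe sum_distrib_left algebra_simps flip: sum_negf)
    also have "(\<Sum>l<n. cnj (U $$ (l,j)) * Y $$ (l,j)) = (adj U * Y) $$ (j,j)"
      using Yc Uc j by (simp add: mult_idx)
    finally show ?thesis by simp
  qed
  have G2: "(adj Y * Q * Y) $$ (j,j) = - complex_of_real (d j) * (adj Y * Y) $$ (j,j)" if j: "j < n" for j
  proof -
    have "(adj Y * Q * Y) $$ (j,j) = (adj Y * (Q * Y)) $$ (j,j)" using Yc Qc by simp
    also have "\<dots> = (\<Sum>l<n. cnj (Y $$ (l,j)) * (Q * Y) $$ (l,j))"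
      using Yc Qc j by (subst mult_idx[of _ n n _ n]) auto
    also have "\<dots> = - complex_of_real (d j) * (\<Sum>l<n. cnj (Y $$ (l,j)) * Y $$ (l,j))"
      using j by (simp add: QYe sum_distrib_left algebra_simps flip: sum_negf)
    also have "(\<Sum>l<n. cnj (Y $$ (l,j)) * Y $$ (l,j)) = (adj Y * Y) $$ (j,j)"
      using Yc j by (simp add: mult_idx)
    finally show ?thesis .
  qed
  have psd1: "psd n (adj Y * Q * Y)" using psd_congr[OF Q Yc] .
  have psd2: "psd n (adj Y * Y)" using psd_gram[OF Yc] .
  have Y0: "Y = 0\<^sub>m n n"
  proof (rule gram_zero[OF Yc])
    fix j assume j: "j < n"
    show "(adj Y * Y) $$ (j,j) = 0"
    proof (cases "d j = 0")
      case True then show ?thesis using G1[OF j] by simp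
    next
      case False
      then have dj: "0 < d j" using d j by force
      have a: "Im ((adj Y * Y) $$ (j,j)) = 0" "0 \<le> Re ((adj Y * Y) $$ (j,j))" using psd_diag_real[OF psd2 j] by auto
      have "0 \<le> Re ((adj Y * Q * Y) $$ (j,j))" using psd_diag_real[OF psd1 j] by auto
      then have "0 \<le> - d j * Re ((adj Y * Y) $$ (j,j))" unfolding G2[OF j] using a by simp
      then have "Re ((adj Y * Y) $$ (j,j)) \<le> 0" using dj by (simp add: mult_le_0_iff)
      then show ?thesis using a by (simp add: complex_eq_iff)
    qed
  qed
  have QU: "Q * U = U * D"
  proof (rule eq_matI)
    fix i j assume "i < dim_row (U * D)" "j < dim_col (U * D)"
    then have ij: "i < n" "j < n" using Uc Dc by auto
    have "Y $$ (i,j) = 0" using Y0 ij by simp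
    then show "(Q * U) $$ (i,j) = (U * D) $$ (i,j)" unfolding Y_def using ij Qc Uc Dc by simp
  qed (use Qc Uc Dc in auto)
  have "Q = Q * U * adj U" using Qc Uc by simp
  also have "\<dots> = U * D * adj U" using QU by simp
  also have "\<dots> = P" unfolding Pd D_def ..
  finally show ?thesis by simp
qed

section \<open>Absolute value and trace norm\<close>

lemma mat_abs_unique: assumes u: "u \<in> carrier_mat n n" and P: "psd n P" and PP: "P * P = adj u * u"
  shows "mat_abs u = P"
  unfolding mat_abs_def
proof (rule the_equality)
  show "psd (dim_col u) P \<and> P * P = adj u * u" using u P PP by simp
  fix Q assume "psd (dim_col u) Q \<and> Q * Q = adj u * u"
  then show "Q = P" using psd_sqrt_unique[OF _ P, of Q] u PP by auto
qed

lemma mat_abs: assumes u: "u \<in> carrier_mat n n"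
  shows "psd n (mat_abs u)" "mat_abs u * mat_abs u = adj u * u"
proof -
  obtain R where R: "psd n R" "R * R = adj u * u" using psd_sqrt_exists[OF psd_gram[OF u]] by blast
  have "mat_abs u = R" using mat_abs_unique[OF u R] .
  then show "psd n (mat_abs u)" "mat_abs u * mat_abs u = adj u * u" using R by auto
qed

lemma mat_abs_carrier: "u \<in> carrier_mat n n \<Longrightarrow> mat_abs u \<in> carrier_mat n n"
  using psdD(3)[OF mat_abs(1)] .

lemma tn_eq: "u \<in> carrier_mat n n \<Longrightarrow> mtrace (mat_abs u) = complex_of_real (trace_norm u)"
  unfolding trace_norm_def using psd_trace_real[OF mat_abs(1)] by simp

lemma tn_nonneg: "u \<in> carrier_mat n n \<Longrightarrow> 0 \<le> trace_norm u"
  unfolding trace_norm_def using psd_trace[OF mat_abs(1)] by simp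

lemma tn_psd: assumes A: "psd n A" shows "trace_norm A = Re (mtrace A)"
proof -
  have Ac: "A \<in> carrier_mat n n" using psdD(3)[OF A] .
  have "mat_abs A = A" using mat_abs_unique[OF Ac A] psd_hermitian[OF A] by simp
  then show ?thesis unfolding trace_norm_def by simp
qed

lemma tn_smult: assumes u: "u \<in> carrier_mat n n" shows "trace_norm (c \<cdot>\<^sub>m u) = cmod c * trace_norm u"
proof -
  define P where "P = mat_abs u"
  have P: "psd n P" "P * P = adj u * u" using mat_abs[OF u] unfolding P_def by auto
  have Pc: "P \<in> carrier_mat n n" using psdD(3)[OF P(1)] .
  have cu: "c \<cdot>\<^sub>m u \<in> carrier_mat n n" using u by simp
  have "(complex_of_real (cmod c) \<cdot>\<^sub>m P) * (complex_of_real (cmod c) \<cdot>\<^sub>m P) = complex_of_real ((cmod c)^2) \<cdot>\<^sub>m (P * P)"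
    using Pc by (simp add: mult_smult' smult_mult' smult_smult' power2_eq_square)
  also have "\<dots> = (cnj c * c) \<cdot>\<^sub>m (adj u * u)" using P(2) by (simp add: cnj_mult_self)
  also have "\<dots> = adj (c \<cdot>\<^sub>m u) * (c \<cdot>\<^sub>m u)" using u by (simp add: adj_smult mult_smult' smult_mult' smult_smult' mult.commute)
  finally have "mat_abs (c \<cdot>\<^sub>m u) = complex_of_real (cmod c) \<cdot>\<^sub>m P"
    using mat_abs_unique[OF cu psd_smult[OF P(1)]] by simp
  then show ?thesis unfolding trace_norm_def P_def using mtrace_smult[OF Pc] P_def by simp
qed


lemma udu_eq: "(\<And>i. i < n \<Longrightarrow> f i = g i) \<Longrightarrow> U * diagm n f * adj U = U * diagm n g * adj U"
  using diagm_cong[of n f g] by simp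

lemma udu_carrier: "U \<in> carrier_mat n n \<Longrightarrow> U * diagm n d * adj U \<in> carrier_mat n n"
  by simp

lemma polar: assumes u: "u \<in> carrier_mat n n"
  shows "\<exists>W. W \<in> carrier_mat n n \<and> u = W * mat_abs u \<and> adj W * W * mat_abs u = mat_abs u \<and> W * adj W * W = W"
proof -
  define P where "P = mat_abs u"
  have P: "psd n P" "P * P = adj u * u" using mat_abs[OF u] by (auto simp: P_def)
  obtain U d where U: "unitary n U" and d: "\<forall>i<n. 0 \<le> d i" and Pd: "P = U * diagm n d * adj U"
    using spectral_psd[OF P(1)] by blast
  have Uc: "U \<in> carrier_mat n n" "adj U * U = 1\<^sub>m n" "U * adj U = 1\<^sub>m n" using unitaryD[OF U] by auto
  define dp where "dp = (\<lambda>i. if d i = 0 then 0 else 1 / d i)"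
  define pi where "pi = (\<lambda>i. if d i = 0 then 0 else (1::real))"
  define Pp where "Pp = U * diagm n dp * adj U"
  define Pi where "Pi = U * diagm n pi * adj U"
  define Pc where "Pc = U * diagm n (\<lambda>i. 1 - pi i) * adj U"
  have cP: "P \<in> carrier_mat n n" "Pp \<in> carrier_mat n n" "Pi \<in> carrier_mat n n" "Pc \<in> carrier_mat n n"
    using Uc unfolding Pd Pp_def Pi_def Pc_def by (auto simp del: massoc)
  have f1: "P * Pp = Pi" unfolding Pd Pp_def Pi_def udu_mult[OF U] by (rule udu_eq) (auto simp: dp_def pi_def)
  have f2: "Pp * P = Pi" unfolding Pd Pp_def Pi_def udu_mult[OF U] by (rule udu_eq) (auto simp: dp_def pi_def)
  have f3: "Pi * P = P" unfolding Pd Pp_def Pi_def udu_mult[OF U] by (rule udu_eq) (auto simp: dp_def pi_def)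
  have f4: "P * Pi = P" unfolding Pd Pp_def Pi_def udu_mult[OF U] by (rule udu_eq) (auto simp: dp_def pi_def)
  have f5: "Pp * Pi = Pp" unfolding Pd Pp_def Pi_def udu_mult[OF U] by (rule udu_eq) (auto simp: dp_def pi_def)
  have f7: "Pc * P = 0\<^sub>m n n"
  proof -
    have "Pc * P = U * diagm n (\<lambda>_. 0) * adj U" unfolding Pd Pc_def udu_mult[OF U] by (rule udu_eq) (auto simp: pi_def)
    then show ?thesis using udu_zero[OF Uc(1)] by simp
  qed
  have f8: "Pi + Pc = 1\<^sub>m n"
  proof (rule eq_matI)
    fix i j assume "i < dim_row (1\<^sub>m n)" "j < dim_col (1\<^sub>m n)"
    then have ij: "i < n" "j < n" by auto
    have "(Pi + Pc) $$ (i,j) = Pi $$ (i,j) + Pc $$ (i,j)" using cP ij by simp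
    also have "\<dots> = (\<Sum>l<n. U $$ (i,l) * complex_of_real (pi l) * cnj (U $$ (j,l))) + (\<Sum>l<n. U $$ (i,l) * complex_of_real (1 - pi l) * cnj (U $$ (j,l)))"
      unfolding Pi_def Pc_def using udu_idx[OF Uc(1) ij] by simp
    also have "\<dots> = (\<Sum>l<n. U $$ (i,l) * cnj (U $$ (j,l)))"
      by (simp add: sum.distrib[symmetric] algebra_simps)
    also have "\<dots> = 1\<^sub>m n $$ (i,j)" using unitary_entries(2)[OF U ij] ij by simp
    finally show "(Pi + Pc) $$ (i,j) = 1\<^sub>m n $$ (i,j)" .
  qed (use cP in auto)
  have hPp: "adj Pp = Pp" unfolding Pp_def using adj_udu[OF Uc(1)] .
  have hPc: "adj Pc = Pc" unfolding Pc_def using adj_udu[OF Uc(1)] .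
  have uu: "adj u * (u * X) = P * (P * X)" if X: "dim_row X = n" for X
  proof -
    have "adj u * (u * X) = (adj u * u) * X" using u X by simp
    also have "\<dots> = (P * P) * X" using P(2) by simp
    also have "\<dots> = P * (P * X)" using cP X by simp
    finally show ?thesis .
  qed
  have uPc: "u * Pc = 0\<^sub>m n n"
  proof (rule gram_zero)
    show "u * Pc \<in> carrier_mat n n" using u cP by simp
    fix j assume j: "j < n"
    have "adj (u * Pc) * (u * Pc) = Pc * (P * (P * Pc))" using u cP hPc by (simp add: uu)
    also have "\<dots> = (Pc * P) * (P * Pc)" using cP by simp
    also have "\<dots> = 0\<^sub>m n n" unfolding f7 using cP by simp
    finally show "(adj (u * Pc) * (u * Pc)) $$ (j,j) = 0" using j by simp
  qed
  have uPi: "u * Pi = u"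
  proof -
    have "u = u * 1\<^sub>m n" using u by simp
    also have "\<dots> = u * Pi + u * Pc" unfolding f8[symmetric] using u cP by (simp add: mult_add')
    also have "\<dots> = u * Pi" unfolding uPc using u cP by simp
    finally show ?thesis by simp
  qed
  define W where "W = u * Pp"
  have Wc: "W \<in> carrier_mat n n" unfolding W_def using u cP by simp
  have i: "u = W * P"
  proof -
    have "W * P = u * (Pp * P)" unfolding W_def using u cP by simp
    then show ?thesis unfolding f2 uPi by simp
  qed
  have ii: "adj W * W * P = P"
  proof -
    have "adj W * W * P = (Pp * P) * (P * (Pp * P))" unfolding W_def using u cP hPp by (simp add: uu)
    also have "\<dots> = P" unfolding f2 f4 f3 ..
    finally show ?thesis .
  qed
  have iii: "W * adj W * W = W"
  proof -
    have "W * adj W * W = u * ((Pp * (Pp * P)) * (P * Pp))" unfolding W_def using u cP hPp by (simp add: uu)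
    also have "\<dots> = W" unfolding f2 f1 f5 W_def ..
    finally show ?thesis .
  qed
  show ?thesis using Wc i ii iii unfolding P_def by blast
qed

lemma proj_trace_le: assumes A: "psd n A" and Qc: "Q \<in> carrier_mat n n" and Qh: "adj Q = Q" and QQ: "Q * Q = Q"
  shows "Re (mtrace (A * Q)) \<le> Re (mtrace A)"
proof -
  have Ac: "A \<in> carrier_mat n n" using psdD(3)[OF A] .
  define R where "R = 1\<^sub>m n - Q"
  have Rc: "R \<in> carrier_mat n n" unfolding R_def using Qc by (rule minus_carrier_mat)
  have Rh: "adj R = R" unfolding R_def using Qc Qh by (simp add: adj_minus[of _ n n])
  have RR: "R * R = R"
  proof -
    have "R * R = R - (Q - Q * Q)" unfolding R_def using Qc by (simp add: minus_mult' mult_minus')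
    also have "\<dots> = R" unfolding QQ by (rule eq_matI) (use Rc Qc in auto)
    finally show ?thesis .
  qed
  have "mtrace A - mtrace (A * Q) = mtrace (A * R)"
    unfolding R_def using Ac Qc by (simp add: mult_minus' mtrace_minus[of _ n])
  also have "\<dots> = mtrace (A * R * R)" using Ac Rc RR by simp
  also have "\<dots> = mtrace (R * (A * R))" using mtrace_mult_comm[of "A * R" n n R] Ac Rc by simp
  also have "\<dots> = mtrace (adj R * A * R)" using Rh Ac Rc by simp
  finally have eq: "mtrace A - mtrace (A * Q) = mtrace (adj R * A * R)" .
  have "0 \<le> Re (mtrace (adj R * A * R))" using psd_trace[OF psd_congr[OF A Rc]] by simp
  then show ?thesis using arg_cong[OF eq, of Re] by simp
qed


lemma blk_carrier[simp]: "blk n X a b \<in> carrier_mat n n" by (simp add: blk_def)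
lemma blk_dims[simp]: "dim_row (blk n X a b) = n" "dim_col (blk n X a b) = n" by (auto simp: blk_def)
lemma blk_idx[simp]: "i < n \<Longrightarrow> j < n \<Longrightarrow> blk n X a b $$ (i,j) = X $$ (a*n+i, b*n+j)"
  by (simp add: blk_def)

lemma bf_cong: "(\<And>i. i < n \<Longrightarrow> x i = x' i) \<Longrightarrow> (\<And>i. i < n \<Longrightarrow> y i = y' i) \<Longrightarrow> bf n A x y = bf n A x' y'"
  unfolding bf_def by (intro sum.cong refl) auto

lemma bf_neg_left: "bf n A (\<lambda>i. - x i) y = - bf n A x y"
  unfolding bf_def by (simp add: sum_negf[symmetric])

lemma bf_neg_right: "bf n A x (\<lambda>i. - y i) = - bf n A x y"
  unfolding bf_def by (simp add: sum_negf[symmetric])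

lemma bf_zero_left: "bf n A (\<lambda>i. 0) y = 0"
  unfolding bf_def by simp

lemma bf_split: "bf (2*k) M y y = bf k (blk k M 0 0) y y + bf k (blk k M 0 1) y (\<lambda>r. y (k+r))
   + bf k (blk k M 1 0) (\<lambda>r. y (k+r)) y + bf k (blk k M 1 1) (\<lambda>r. y (k+r)) (\<lambda>r. y (k+r))"
  unfolding bf_def by (simp add: sum_lt_2 sum.distrib)

lemma colv_one: "i < n \<Longrightarrow> c < n \<Longrightarrow> colv (1\<^sub>m n) c i = (if i = c then 1 else 0)"
  unfolding colv_def by auto

lemma blk_ineq:
  assumes M: "psd (2*k) M" and X: "X \<in> carrier_mat k k"
  shows "2 * Re (mtrace (adj X * blk k M 0 1)) \<le> Re (mtrace (adj X * blk k M 0 0 * X)) + Re (mtrace (blk k M 1 1))"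
proof -
  have Mc: "M \<in> carrier_mat (2*k) (2*k)" using psdD(3)[OF M] .
  have Mh: "adj M = M" using psd_hermitian[OF M] .
  define A where "A = blk k M 0 0"
  define B where "B = blk k M 0 1"
  define B2 where "B2 = blk k M 1 0"
  define C where "C = blk k M 1 1"
  have cs: "A \<in> carrier_mat k k" "B \<in> carrier_mat k k" "B2 \<in> carrier_mat k k" "C \<in> carrier_mat k k"
    unfolding A_def B_def B2_def C_def by auto
  have B2B: "B2 = adj B"
  proof (rule eq_matI)
    fix i j assume "i < dim_row (adj B)" "j < dim_col (adj B)"
    then have ij: "i < k" "j < k" using cs by auto
    have "M $$ (k + i, j) = cnj (M $$ (j, k + i))"
      using hermitian_entry[OF Mh Mc, of j "k+i"] ij by simp
    then show "B2 $$ (i,j) = adj B $$ (i,j)" unfolding B2_def B_def using ij by simp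
  qed (use cs in auto)
  define y where "y = (\<lambda>c r. if r < k then - X $$ (r,c) else (if r - k = c then 1 else (0::complex)))"
  have q: "bf (2*k) M (y c) (y c) = (adj X * A * X) $$ (c,c) - (adj X * B) $$ (c,c) - (B2 * X) $$ (c,c) + C $$ (c,c)"
    if c: "c < k" for c
  proof -
    have e1: "bf k A (y c) (y c) = (adj X * A * X) $$ (c,c)"
    proof -
      have "bf k A (y c) (y c) = bf k A (\<lambda>r. - colv X c r) (\<lambda>r. - colv X c r)"
        by (rule bf_cong) (use c in \<open>auto simp: y_def colv_def\<close>)
      also have "\<dots> = bf k A (colv X c) (colv X c)" by (simp add: bf_neg_left bf_neg_right)
      also have "\<dots> = (adj X * A * X) $$ (c,c)" by (rule bf_cols[OF cs(1) X X c c])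
      finally show ?thesis .
    qed
    have e2: "bf k B (y c) (\<lambda>r. y c (k+r)) = - (adj X * B) $$ (c,c)"
    proof -
      have "bf k B (y c) (\<lambda>r. y c (k+r)) = bf k B (\<lambda>r. - colv X c r) (colv (1\<^sub>m k) c)"
        by (rule bf_cong) (use c in \<open>auto simp: y_def colv_def\<close>)
      also have "\<dots> = - bf k B (colv X c) (colv (1\<^sub>m k) c)" by (simp add: bf_neg_left)
      also have "bf k B (colv X c) (colv (1\<^sub>m k) c) = (adj X * B * 1\<^sub>m k) $$ (c,c)"
        by (rule bf_cols[OF cs(2) X _ c c]) simp
      finally show ?thesis using X cs by simp
    qed
    have e3: "bf k B2 (\<lambda>r. y c (k+r)) (y c) = - (B2 * X) $$ (c,c)"
    proof -
      have "bf k B2 (\<lambda>r. y c (k+r)) (y c) = bf k B2 (colv (1\<^sub>m k) c) (\<lambda>r. - colv X c r)"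
        by (rule bf_cong) (use c in \<open>auto simp: y_def colv_def\<close>)
      also have "\<dots> = - bf k B2 (colv (1\<^sub>m k) c) (colv X c)" by (simp add: bf_neg_right)
      also have "bf k B2 (colv (1\<^sub>m k) c) (colv X c) = (adj (1\<^sub>m k) * B2 * X) $$ (c,c)"
        by (rule bf_cols[OF cs(3) _ X c c]) simp
      finally show ?thesis using X cs by simp
    qed
    have e4: "bf k C (\<lambda>r. y c (k+r)) (\<lambda>r. y c (k+r)) = C $$ (c,c)"
    proof -
      have "bf k C (\<lambda>r. y c (k+r)) (\<lambda>r. y c (k+r)) = bf k C (colv (1\<^sub>m k) c) (colv (1\<^sub>m k) c)"
        by (rule bf_cong) (use c in \<open>auto simp: y_def colv_def\<close>)
      also have "\<dots> = (adj (1\<^sub>m k) * C * 1\<^sub>m k) $$ (c,c)"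
        by (rule bf_cols[OF cs(4) _ _ c c]) simp_all
      finally show ?thesis using cs by simp
    qed
    show ?thesis unfolding bf_split A_def[symmetric] B_def[symmetric] B2_def[symmetric] C_def[symmetric]
      e1 e2 e3 e4 by simp
  qed
  have "0 \<le> (\<Sum>c<k. Re (bf (2*k) M (y c) (y c)))" using psdD(2)[OF M] by (simp add: sum_nonneg)
  also have "\<dots> = Re (\<Sum>c<k. bf (2*k) M (y c) (y c))" by (simp add: Re_sum)
  also have "(\<Sum>c<k. bf (2*k) M (y c) (y c)) = mtrace (adj X * A * X) - mtrace (adj X * B) - mtrace (B2 * X) + mtrace C"
    using q X cs by (simp add: mtrace_def sum.distrib sum_subtractf)
  also have "mtrace (B2 * X) = cnj (mtrace (adj X * B))"
  proof -
    have "B2 * X = adj (adj X * B)" unfolding B2B using X cs by simp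
    then show ?thesis using mtrace_adj[of "adj X * B" k] X cs by simp
  qed
  finally show ?thesis unfolding A_def B_def C_def by simp
qed

lemma key_block: assumes u: "u \<in> carrier_mat n n" and W: "W \<in> carrier_mat n n" and uW: "u = W * mat_abs u"
  shows "\<exists>M. psd (2*n) M \<and> blk n M 0 0 = W * mat_abs u * adj W \<and> blk n M 0 1 = u \<and> blk n M 1 1 = mat_abs u"
proof -
  define P where "P = mat_abs u"
  have P: "psd n P" using mat_abs(1)[OF u] unfolding P_def .
  have Pc: "P \<in> carrier_mat n n" using psdD(3)[OF P] .
  define Z where "Z = mat n (2*n) (\<lambda>(a,s). if s < n then cnj (W $$ (s,a)) else (if a = s - n then 1 else (0::complex)))"
  have Zc: "Z \<in> carrier_mat n (2*n)" unfolding Z_def by simp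
  define M where "M = adj Z * P * Z"
  have Mpsd: "psd (2*n) M" unfolding M_def by (rule psd_congr[OF P Zc])
  have Me: "M $$ (r,s) = bf n P (colv Z r) (colv Z s)" if "r < 2*n" "s < 2*n" for r s
    unfolding M_def using bf_cols[OF Pc Zc Zc that] by simp
  have cZ1: "colv Z i a = colv (adj W) i a" if "i < n" "a < n" for i a
    using that W unfolding Z_def colv_def by simp
  have cZ2: "colv Z (n+i) a = colv (1\<^sub>m n) i a" if "i < n" "a < n" for i a
    using that unfolding Z_def colv_def by auto
  have b00: "blk n M 0 0 = W * P * adj W"
  proof (rule eq_matI)
    fix i j assume "i < dim_row (W * P * adj W)" "j < dim_col (W * P * adj W)"
    then have ij: "i < n" "j < n" using W Pc by auto
    have "blk n M 0 0 $$ (i,j) = bf n P (colv Z i) (colv Z j)" using ij Me by simp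
    also have "\<dots> = bf n P (colv (adj W) i) (colv (adj W) j)" using ij by (intro bf_cong) (auto simp: cZ1)
    also have "\<dots> = (adj (adj W) * P * adj W) $$ (i,j)" using W ij by (intro bf_cols[OF Pc]) auto
    finally show "blk n M 0 0 $$ (i,j) = (W * P * adj W) $$ (i,j)" by simp
  qed (use W Pc in auto)
  have b01: "blk n M 0 1 = u"
  proof (rule eq_matI)
    fix i j assume "i < dim_row u" "j < dim_col u"
    then have ij: "i < n" "j < n" using u by auto
    have "blk n M 0 1 $$ (i,j) = bf n P (colv Z i) (colv Z (n+j))" using ij Me by simp
    also have "\<dots> = bf n P (colv (adj W) i) (colv (1\<^sub>m n) j)" using ij by (intro bf_cong) (auto simp: cZ1 cZ2)
    also have "\<dots> = (adj (adj W) * P * 1\<^sub>m n) $$ (i,j)" using W ij by (intro bf_cols[OF Pc]) auto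
    also have "\<dots> = u $$ (i,j)" using W Pc uW u unfolding P_def by simp
    finally show "blk n M 0 1 $$ (i,j) = u $$ (i,j)" .
  qed (use u in auto)
  have b11: "blk n M 1 1 = P"
  proof (rule eq_matI)
    fix i j assume "i < dim_row P" "j < dim_col P"
    then have ij: "i < n" "j < n" using Pc by auto
    have "blk n M 1 1 $$ (i,j) = bf n P (colv Z (n+i)) (colv Z (n+j))" using ij Me by simp
    also have "\<dots> = bf n P (colv (1\<^sub>m n) i) (colv (1\<^sub>m n) j)" using ij by (intro bf_cong) (auto simp: cZ2)
    also have "\<dots> = (adj (1\<^sub>m n) * P * 1\<^sub>m n) $$ (i,j)" using ij by (intro bf_cols[OF Pc]) auto
    also have "\<dots> = P $$ (i,j)" using Pc by simp
    finally show "blk n M 1 1 $$ (i,j) = P $$ (i,j)" .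
  qed (use Pc in auto)
  show ?thesis using Mpsd b00 b01 b11 unfolding P_def by blast
qed

lemma tr_WPW: assumes W: "W \<in> carrier_mat n n" and P: "P \<in> carrier_mat n n" and WWP: "adj W * W * P = P"
  shows "mtrace (W * P * adj W) = mtrace P"
proof -
  have "mtrace (W * P * adj W) = mtrace (W * (P * adj W))" using W P by simp
  also have "\<dots> = mtrace ((P * adj W) * W)" by (rule mtrace_mult_comm[of _ n n]) (use W P in auto)
  also have "\<dots> = mtrace ((adj W * W) * P)"
    using mtrace_mult_comm[of P n n "adj W * W"] W P by simp
  also have "\<dots> = mtrace P" using WWP by simp
  finally show ?thesis .
qed

lemma tn_trace_bound: assumes u: "u \<in> carrier_mat n n" shows "cmod (mtrace u) \<le> trace_norm u"
proof -
  obtain W where W: "W \<in> carrier_mat n n" "u = W * mat_abs u" "adj W * W * mat_abs u = mat_abs u"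
    using polar[OF u] by blast
  define P where "P = mat_abs u"
  have Pc: "P \<in> carrier_mat n n" using mat_abs_carrier[OF u] unfolding P_def .
  obtain M where M: "psd (2*n) M" "blk n M 0 0 = W * P * adj W" "blk n M 0 1 = u" "blk n M 1 1 = P"
    using key_block[OF u W(1,2)] unfolding P_def by blast
  define t where "t = mtrace u"
  define \<theta> where "\<theta> = (if t = 0 then 1 else t / complex_of_real (cmod t))"
  have th1: "cnj \<theta> * \<theta> = 1" unfolding \<theta>_def by (auto simp: cnj_mult_self norm_divide)
  have th2: "cnj \<theta> * t = complex_of_real (cmod t)"
  proof (cases "t = 0")
    case False
    have "cnj \<theta> * t = (cnj t * t) / complex_of_real (cmod t)" unfolding \<theta>_def using False by simp
    also have "\<dots> = complex_of_real ((cmod t)^2 / cmod t)" unfolding cnj_mult_self by simp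
    also have "(cmod t)^2 / cmod t = cmod t" using False by (simp add: power2_eq_square)
    finally show ?thesis .
  qed (simp add: \<theta>_def)
  define X where "X = \<theta> \<cdot>\<^sub>m 1\<^sub>m n"
  have Xc: "X \<in> carrier_mat n n" unfolding X_def by simp
  have a1: "mtrace (adj X * u) = complex_of_real (cmod t)"
    unfolding X_def adj_smult using u th2 unfolding t_def by (simp add: smult_mult' mtrace_smult[of _ n])
  have a2: "adj X * (W * P * adj W) * X = W * P * adj W"
  proof -
    have th1': "\<theta> * cnj \<theta> = 1" using th1 by (simp add: mult.commute)
    have "adj X * (W * P * adj W) * X = (\<theta> * cnj \<theta>) \<cdot>\<^sub>m (W * P * adj W)"
      unfolding X_def adj_smult using W Pc by (simp add: smult_mult' mult_smult' smult_smult' del: massoc)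
    also have "\<dots> = W * P * adj W" unfolding th1' by (rule eq_matI) auto
    finally show ?thesis .
  qed
  have a3: "mtrace (W * P * adj W) = mtrace P" using tr_WPW[OF W(1) Pc] W(3) unfolding P_def by simp
  have "2 * Re (mtrace (adj X * u)) \<le> Re (mtrace (adj X * (W * P * adj W) * X)) + Re (mtrace P)"
    using blk_ineq[OF M(1) Xc] M by simp
  then have "2 * cmod t \<le> 2 * Re (mtrace P)" unfolding a1 a2 a3 by simp
  then show ?thesis unfolding t_def trace_norm_def P_def by simp
qed


section \<open>Operations contract the trace norm\<close>

lemma operationD:
  assumes "operation n n' T"
  shows "\<And>A. A \<in> carrier_mat n n \<Longrightarrow> T A \<in> carrier_mat n' n'"
    "\<And>A B. A \<in> carrier_mat n n \<Longrightarrow> B \<in> carrier_mat n n \<Longrightarrow> T (A + B) = T A + T B"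
    "\<And>A c. A \<in> carrier_mat n n \<Longrightarrow> T (c \<cdot>\<^sub>m A) = c \<cdot>\<^sub>m T A"
    "\<And>k X. psd (k*n) X \<Longrightarrow> psd (k*n') (ampl k n n' T X)"
    "\<And>A. psd n A \<Longrightarrow> Re (mtrace (T A)) \<le> Re (mtrace A)"
  using assms unfolding operation_def by auto

lemma ampl_blk: assumes T: "\<And>A. A \<in> carrier_mat n n \<Longrightarrow> T A \<in> carrier_mat n' n'" and a: "a < k" and b: "b < k"
  shows "blk n' (ampl k n n' T X) a b = T (blk n X a b)"
proof (rule eq_matI)
  have Tc: "T (blk n X a b) \<in> carrier_mat n' n'" using T by simp
  fix i j assume "i < dim_row (T (blk n X a b))" "j < dim_col (T (blk n X a b))"
  then have ij: "i < n'" "j < n'" using Tc by auto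
  have l: "a*n'+i < k*n'" "b*n'+j < k*n'" using a b ij by auto
  show "blk n' (ampl k n n' T X) a b $$ (i,j) = T (blk n X a b) $$ (i,j)"
    using ij l unfolding ampl_def by simp
qed (use T[of "blk n X a b"] in auto)

lemma op_psd: assumes T: "operation n n' T" and A: "psd n A" shows "psd n' (T A)"
proof -
  have Ac: "A \<in> carrier_mat n n" using psdD(3)[OF A] .
  have TA: "T A \<in> carrier_mat n' n'" using operationD(1)[OF T Ac] .
  have "psd (1*n') (ampl 1 n n' T A)" using operationD(4)[OF T, of 1 A] A by simp
  moreover have "ampl 1 n n' T A = T A"
  proof (rule eq_matI)
    fix i j assume "i < dim_row (T A)" "j < dim_col (T A)"
    then have ij: "i < n'" "j < n'" using TA by auto
    have "blk n A 0 0 = A" by (rule eq_matI) (use Ac in auto)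
    then show "ampl 1 n n' T A $$ (i,j) = T A $$ (i,j)" using ij unfolding ampl_def by simp
  qed (use TA in \<open>auto simp: ampl_def\<close>)
  ultimately show ?thesis by simp
qed

lemma op_contract: assumes T: "operation n n' T" and u: "u \<in> carrier_mat n n"
  shows "trace_norm (T u) \<le> trace_norm u"
proof -
  note Tc = operationD(1)[OF T]
  obtain W where W: "W \<in> carrier_mat n n" "u = W * mat_abs u" "adj W * W * mat_abs u = mat_abs u"
    using polar[OF u] by blast
  define P where "P = mat_abs u"
  have P: "psd n P" using mat_abs(1)[OF u] unfolding P_def .
  have Pc: "P \<in> carrier_mat n n" using psdD(3)[OF P] .
  obtain M where M: "psd (2*n) M" "blk n M 0 0 = W * P * adj W" "blk n M 0 1 = u" "blk n M 1 1 = P"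
    using key_block[OF u W(1,2)] unfolding P_def by blast
  define M' where "M' = ampl 2 n n' T M"
  have M': "psd (2*n') M'" unfolding M'_def using operationD(4)[OF T M(1)] .
  have bM': "blk n' M' a b = T (blk n M a b)" if "a < 2" "b < 2" for a b
    unfolding M'_def using ampl_blk[OF Tc that] by simp
  define v where "v = T u"
  have vc: "v \<in> carrier_mat n' n'" unfolding v_def using Tc[OF u] .
  obtain W' where W': "W' \<in> carrier_mat n' n'" "v = W' * mat_abs v" "adj W' * W' * mat_abs v = mat_abs v"
    "W' * adj W' * W' = W'"
    using polar[OF vc] by blast
  define A where "A = W * P * adj W"
  have A: "psd n A" unfolding A_def using psd_congr[OF P, of "adj W" n] W(1) by simp
  have Ac: "A \<in> carrier_mat n n" using psdD(3)[OF A] .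
  have TA: "psd n' (T A)" using op_psd[OF T A] .
  have TAc: "T A \<in> carrier_mat n' n'" using psdD(3)[OF TA] .
  have ineq: "2 * Re (mtrace (adj W' * v)) \<le> Re (mtrace (adj W' * T A * W')) + Re (mtrace (T P))"
    using blk_ineq[OF M' W'(1)] bM'[of 0 1] bM'[of 0 0] bM'[of 1 1] M unfolding A_def v_def by simp
  have l1: "mtrace (adj W' * v) = complex_of_real (trace_norm v)"
  proof -
    have "adj W' * v = adj W' * W' * mat_abs v" using W' mat_abs_carrier[OF vc] by (subst W'(2)) simp
    then show ?thesis using W'(3) tn_eq[OF vc] by simp
  qed
  define Q where "Q = W' * adj W'"
  have Qc: "Q \<in> carrier_mat n' n'" unfolding Q_def using W' by simp
  have Qh: "adj Q = Q" unfolding Q_def using W' by simp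
  have QQ: "Q * Q = Q"
  proof -
    have "Q * Q = (W' * adj W' * W') * adj W'" unfolding Q_def using W'(1) by simp
    then show ?thesis unfolding W'(4) Q_def .
  qed
  have l2: "mtrace (adj W' * T A * W') = mtrace (T A * Q)"
  proof -
    have "mtrace (adj W' * T A * W') = mtrace (adj W' * (T A * W'))" using W' TAc by simp
    also have "\<dots> = mtrace ((T A * W') * adj W')" by (rule mtrace_mult_comm[of _ n' n']) (use W' TAc in auto)
    also have "\<dots> = mtrace (T A * Q)" unfolding Q_def using W' TAc by simp
    finally show ?thesis .
  qed
  have l3: "Re (mtrace (T A * Q)) \<le> Re (mtrace (T A))" using proj_trace_le[OF TA Qc Qh QQ] .
  have l4: "Re (mtrace (T A)) \<le> Re (mtrace A)" using operationD(5)[OF T A] .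
  have l5: "mtrace A = mtrace P" unfolding A_def using tr_WPW[OF W(1) Pc] W(3) unfolding P_def by simp
  have l6: "Re (mtrace (T P)) \<le> Re (mtrace P)" using operationD(5)[OF T P] .
  have "2 * trace_norm v \<le> 2 * Re (mtrace P)" using ineq l1 l2 l3 l4 l5 l6 by simp
  then show ?thesis unfolding v_def trace_norm_def P_def by simp
qed


section \<open>Compressions\<close>

lemma bf_zero_right: "bf n A x (\<lambda>i. 0) = 0"
  unfolding bf_def by simp

lemma bf_blocks: "bf (k*n) Z x y = (\<Sum>b<k. \<Sum>c<k. bf n (blk n Z b c) (\<lambda>j. x (b*n+j)) (\<lambda>m. y (c*n+m)))"
  unfolding bf_def sum_lt_mult
proof (rule sum.cong[OF refl])
  fix b assume b: "b \<in> {..<k}"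
  show "(\<Sum>j<n. \<Sum>c<k. \<Sum>m<n. cnj (x (b*n+j)) * Z $$ (b*n+j, c*n+m) * y (c*n+m)) =
        (\<Sum>c<k. \<Sum>j<n. \<Sum>m<n. cnj (x (b*n+j)) * blk n Z b c $$ (j, m) * y (c*n+m))"
    by (subst sum.swap) (auto intro!: sum.cong)
qed

lemma compress_ampl: assumes X: "X \<in> carrier_mat n' n" and Z: "Z \<in> carrier_mat (k*n) (k*n)"
  shows "\<exists>Y. Y \<in> carrier_mat (k*n) (k*n') \<and> ampl k n n' (\<lambda>A. X * A * adj X) Z = adj Y * Z * Y"
proof -
  define Y where "Y = mat (k*n) (k*n') (\<lambda>(r,c). if r div n = c div n' then cnj (X $$ (c mod n', r mod n)) else 0)"
  have Yc: "Y \<in> carrier_mat (k*n) (k*n')" unfolding Y_def by simp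
  have "ampl k n n' (\<lambda>A. X * A * adj X) Z = adj Y * Z * Y"
  proof (rule eq_matI)
    fix p q assume "p < dim_row (adj Y * Z * Y)" "q < dim_col (adj Y * Z * Y)"
    then have pq: "p < k*n'" "q < k*n'" using Yc Z by auto
    define a where "a = p div n'"
    define i where "i = p mod n'"
    define c where "c = q div n'"
    define l where "l = q mod n'"
    have ai: "a < k" "i < n'" "c < k" "l < n'" using pq divmod_lt unfolding a_def i_def c_def l_def by auto
    have "ampl k n n' (\<lambda>A. X * A * adj X) Z $$ (p,q) = (X * blk n Z a c * adj X) $$ (i,l)"
      using pq unfolding ampl_def a_def c_def i_def l_def by simp
    also have "\<dots> = (adj (adj X) * blk n Z a c * adj X) $$ (i,l)" by simp
    also have "\<dots> = bf n (blk n Z a c) (colv (adj X) i) (colv (adj X) l)"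
      using X ai by (intro bf_cols[symmetric]) auto
    finally have L: "ampl k n n' (\<lambda>A. X * A * adj X) Z $$ (p,q) = bf n (blk n Z a c) (colv (adj X) i) (colv (adj X) l)" .
    have "(adj Y * Z * Y) $$ (p,q) = bf (k*n) Z (colv Y p) (colv Y q)"
      using bf_cols[OF Z Yc Yc pq] by simp
    also have "\<dots> = (\<Sum>b<k. \<Sum>c'<k. bf n (blk n Z b c') (\<lambda>j. colv Y p (b*n+j)) (\<lambda>m. colv Y q (c'*n+m)))"
      by (rule bf_blocks)
    also have "\<dots> = (\<Sum>b<k. \<Sum>c'<k. if b = a then (if c' = c then bf n (blk n Z a c) (colv (adj X) i) (colv (adj X) l) else 0) else 0)"
    proof (intro sum.cong refl)
      fix b c' assume bc: "b \<in> {..<k}" "c' \<in> {..<k}"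
      have cy: "colv Y p (b*n+j) = (if b = a then colv (adj X) i j else 0)" if j: "j < n" for j
      proof -
        have "b*n+j < k*n" using bc j by simp
        then show ?thesis using j X ai pq unfolding Y_def colv_def a_def i_def by auto
      qed
      have cy2: "colv Y q (c'*n+m) = (if c' = c then colv (adj X) l m else 0)" if m: "m < n" for m
      proof -
        have "c'*n+m < k*n" using bc m by simp
        then show ?thesis using m X ai pq unfolding Y_def colv_def c_def l_def by auto
      qed
      show "bf n (blk n Z b c') (\<lambda>j. colv Y p (b*n+j)) (\<lambda>m. colv Y q (c'*n+m)) =
        (if b = a then (if c' = c then bf n (blk n Z a c) (colv (adj X) i) (colv (adj X) l) else 0) else 0)"
      proof -
        have "bf n (blk n Z b c') (\<lambda>j. colv Y p (b*n+j)) (\<lambda>m. colv Y q (c'*n+m)) =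
          bf n (blk n Z b c') (\<lambda>j. if b = a then colv (adj X) i j else 0) (\<lambda>m. if c' = c then colv (adj X) l m else 0)"
          by (rule bf_cong) (simp_all add: cy cy2)
        then show ?thesis by (cases "b = a"; cases "c' = c") (simp_all add: bf_zero_left bf_zero_right)
      qed
    qed
    also have "\<dots> = bf n (blk n Z a c) (colv (adj X) i) (colv (adj X) l)" using ai by simp
    finally show "ampl k n n' (\<lambda>A. X * A * adj X) Z $$ (p,q) = (adj Y * Z * Y) $$ (p,q)" using L by simp
  qed (use Yc Z in \<open>auto simp: ampl_def\<close>)
  then show ?thesis using Yc by blast
qed

lemma compress_op: assumes X: "X \<in> carrier_mat n' n"
  and tr: "\<And>A. psd n A \<Longrightarrow> Re (mtrace (X * A * adj X)) \<le> Re (mtrace A)"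
  shows "operation n n' (\<lambda>A. X * A * adj X)"
  unfolding operation_def
proof (intro conjI ballI allI impI)
  fix A :: "complex mat" assume A: "A \<in> carrier_mat n n"
  show "X * A * adj X \<in> carrier_mat n' n'" using X A by simp
next
  fix A :: "complex mat" and c assume A: "A \<in> carrier_mat n n"
  show "X * (c \<cdot>\<^sub>m A) * adj X = c \<cdot>\<^sub>m (X * A * adj X)" using X A by (simp add: smult_mult' mult_smult')
next
  fix A B :: "complex mat" assume A: "A \<in> carrier_mat n n" and B: "B \<in> carrier_mat n n"
  show "X * (A + B) * adj X = X * A * adj X + X * B * adj X" using X A B by (simp add: add_mult' mult_add')
next
  fix k Z assume Z: "psd (k*n) Z"
  obtain Y where Y: "Y \<in> carrier_mat (k*n) (k*n')" "ampl k n n' (\<lambda>A. X * A * adj X) Z = adj Y * Z * Y"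
    using compress_ampl[OF X psdD(3)[OF Z]] by blast
  show "psd (k*n') (ampl k n n' (\<lambda>A. X * A * adj X) Z)" unfolding Y(2) by (rule psd_congr[OF Z Y(1)])
next
  fix A assume "psd n A" then show "Re (mtrace (X * A * adj X)) \<le> Re (mtrace A)" by (rule tr)
qed

lemma isometryD: "isometry n n' V \<Longrightarrow> V \<in> carrier_mat n' n" "isometry n n' V \<Longrightarrow> adj V * V = 1\<^sub>m n"
  unfolding isometry_def by auto

lemma isometry_tn1: assumes V: "isometry n n' V" and u: "u \<in> carrier_mat n n"
  shows "trace_norm (V * u * adj V) \<le> trace_norm u"
proof -
  have Vc: "V \<in> carrier_mat n' n" "adj V * V = 1\<^sub>m n" using isometryD[OF V] by auto
  have "operation n n' (\<lambda>A. V * A * adj V)"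
  proof (rule compress_op[OF Vc(1)])
    fix A assume A: "psd n A"
    have Ac: "A \<in> carrier_mat n n" using psdD(3)[OF A] .
    have "mtrace (V * A * adj V) = mtrace (V * (A * adj V))" using Vc Ac by simp
    also have "\<dots> = mtrace ((A * adj V) * V)" by (rule mtrace_mult_comm[of _ n' n]) (use Vc Ac in auto)
    also have "\<dots> = mtrace A" using Vc Ac by simp
    finally show "Re (mtrace (V * A * adj V)) \<le> Re (mtrace A)" by simp
  qed
  from op_contract[OF this u] show ?thesis .
qed

lemma isometry_tn2: assumes V: "isometry n n' V" and u: "u \<in> carrier_mat n' n'"
  shows "trace_norm (adj V * u * V) \<le> trace_norm u"
proof -
  have Vc: "V \<in> carrier_mat n' n" "adj V * V = 1\<^sub>m n" using isometryD[OF V] by auto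
  have "operation n' n (\<lambda>A. adj V * A * adj (adj V))"
  proof (rule compress_op)
    show "adj V \<in> carrier_mat n n'" using Vc by simp
    fix A assume A: "psd n' A"
    have Ac: "A \<in> carrier_mat n' n'" using psdD(3)[OF A] .
    define Q where "Q = V * adj V"
    have Qc: "Q \<in> carrier_mat n' n'" unfolding Q_def using Vc by simp
    have Qh: "adj Q = Q" unfolding Q_def using Vc by simp
    have QQ: "Q * Q = Q" unfolding Q_def using Vc by simp
    have "mtrace (adj V * A * adj (adj V)) = mtrace (adj V * (A * V))" using Vc Ac by simp
    also have "\<dots> = mtrace ((A * V) * adj V)" by (rule mtrace_mult_comm[of _ n n']) (use Vc Ac in auto)
    also have "\<dots> = mtrace (A * Q)" unfolding Q_def using Vc Ac by simp
    finally show "Re (mtrace (adj V * A * adj (adj V))) \<le> Re (mtrace A)"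
      using proj_trace_le[OF A Qc Qh QQ] by simp
  qed
  from op_contract[OF this u] show ?thesis by simp
qed


section \<open>The cross norm\<close>

definition cnset :: "nat \<Rightarrow> nat \<Rightarrow> complex mat \<Rightarrow> real set" where
  "cnset n m t = {(\<Sum>i<N. trace_norm (u i) * trace_norm (v i)) | N u v.
      (\<forall>i<N. u i \<in> carrier_mat n n \<and> v i \<in> carrier_mat m m) \<and>
      t = msum (n*m) (n*m) N (\<lambda>i. kron (u i) (v i))}"

lemma cn_cnset: "cross_norm n m t = Inf (cnset n m t)"
  unfolding cross_norm_def cnset_def ..

lemma cnsetI: "(\<And>i. i < N \<Longrightarrow> u i \<in> carrier_mat n n \<and> v i \<in> carrier_mat m m) \<Longrightarrow>
  t = msum (n*m) (n*m) N (\<lambda>i. kron (u i) (v i)) \<Longrightarrow> x = (\<Sum>i<N. trace_norm (u i) * trace_norm (v i)) \<Longrightarrow>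
  x \<in> cnset n m t"
  unfolding cnset_def by blast

lemma cnsetE: assumes "x \<in> cnset n m t"
  obtains N u v where "\<And>i. i < N \<Longrightarrow> u i \<in> carrier_mat n n" "\<And>i. i < N \<Longrightarrow> v i \<in> carrier_mat m m"
    "t = msum (n*m) (n*m) N (\<lambda>i. kron (u i) (v i))" "x = (\<Sum>i<N. trace_norm (u i) * trace_norm (v i))"
  using assms unfolding cnset_def by blast

lemma cnset_nonneg: "x \<in> cnset n m t \<Longrightarrow> 0 \<le> x"
  by (erule cnsetE) (auto intro!: sum_nonneg mult_nonneg_nonneg tn_nonneg)

lemma cnset_bdd: "bdd_below (cnset n m t)"
  by (rule bdd_belowI[of _ 0]) (rule cnset_nonneg)

lemma cn_lower: "x \<in> cnset n m t \<Longrightarrow> cross_norm n m t \<le> x"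
  unfolding cn_cnset by (rule cInf_lower[OF _ cnset_bdd])

lemma munit_idx[simp]: "i < n \<Longrightarrow> j < n \<Longrightarrow> munit n a b $$ (i,j) = (if i = a \<and> j = b then 1 else 0)"
  by (simp add: munit_def)

lemma munit_carrier[simp]: "munit n a b \<in> carrier_mat n n" by (simp add: munit_def)
lemma munit_dims[simp]: "dim_row (munit n a b) = n" "dim_col (munit n a b) = n" by (auto simp: munit_def)

lemma cnset_nonempty: assumes t: "t \<in> carrier_mat (n*m) (n*m)" shows "cnset n m t \<noteq> {}"
proof -
  define K where "K = n*m"
  define u where "u = (\<lambda>q. t $$ (q div K, q mod K) \<cdot>\<^sub>m munit n (q div K div m) (q mod K div m))"
  define v where "v = (\<lambda>q. munit m (q div K mod m) (q mod K mod m))"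
  have uv: "u q \<in> carrier_mat n n \<and> v q \<in> carrier_mat m m" for q unfolding u_def v_def by simp
  have "t = msum (n*m) (n*m) (K*K) (\<lambda>q. kron (u q) (v q))"
  proof (rule eq_matI)
    fix r s assume "r < dim_row (msum (n*m) (n*m) (K*K) (\<lambda>q. kron (u q) (v q)))"
      "s < dim_col (msum (n*m) (n*m) (K*K) (\<lambda>q. kron (u q) (v q)))"
    then have rs: "r < K" "s < K" unfolding K_def by auto
    then have m0: "0 < m" unfolding K_def by (cases m) auto
    have rl: "r div m < n" "s div m < n" "r mod m < m" "s mod m < m" using rs divmod_lt unfolding K_def by auto
    have e: "kron (u (p*K+q)) (v (p*K+q)) $$ (r,s) = (if p = r \<and> q = s then t $$ (r,s) else 0)"
      if pq: "p < K" "q < K" for p q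
    proof -
      have d1: "(p*K+q) div K = p" "(p*K+q) mod K = q" using pq by auto
      have "kron (u (p*K+q)) (v (p*K+q)) $$ (r,s) = u (p*K+q) $$ (r div m, s div m) * v (p*K+q) $$ (r mod m, s mod m)"
        using rs uv unfolding K_def by (intro kron_idx') auto
      also have "\<dots> = t $$ (p,q) * (if r div m = p div m \<and> s div m = q div m then 1 else 0)
          * (if r mod m = p mod m \<and> s mod m = q mod m then 1 else 0)"
        unfolding u_def v_def d1 using rl by simp
      also have "\<dots> = (if p = r \<and> q = s then t $$ (r,s) else 0)"
        using divmod_eq_iff[OF m0, of r p] divmod_eq_iff[OF m0, of s q] by auto
      finally show ?thesis .
    qed
    have "msum (n*m) (n*m) (K*K) (\<lambda>q. kron (u q) (v q)) $$ (r,s) = (\<Sum>p<K. \<Sum>q<K. kron (u (p*K+q)) (v (p*K+q)) $$ (r,s))"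
      using rs unfolding K_def by (simp add: sum_lt_mult)
    also have "\<dots> = (\<Sum>p<K. \<Sum>q<K. if p = r \<and> q = s then t $$ (r,s) else 0)" by (intro sum.cong refl) (simp add: e)
    also have "\<dots> = (\<Sum>p<K. if p = r then t $$ (r,s) else 0)"
    proof (intro sum.cong refl)
      fix p show "(\<Sum>q<K. if p = r \<and> q = s then t $$ (r,s) else 0) = (if p = r then t $$ (r,s) else 0)"
        using rs by (cases "p = r") simp_all
    qed
    also have "\<dots> = t $$ (r,s)" using rs by simp
    finally show "t $$ (r,s) = msum (n*m) (n*m) (K*K) (\<lambda>q. kron (u q) (v q)) $$ (r,s)" by simp
  qed (use t in auto)
  then have "(\<Sum>i<K*K. trace_norm (u i) * trace_norm (v i)) \<in> cnset n m t"
    by (intro cnsetI[of "K*K" u n v m]) (use uv in auto)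
  then show ?thesis by blast
qed

lemma cn_approx: assumes t: "t \<in> carrier_mat (n*m) (n*m)" and e: "0 < e"
  shows "\<exists>x\<in>cnset n m t. x < cross_norm n m t + e"
proof -
  have "Inf (cnset n m t) < cross_norm n m t + e" using e unfolding cn_cnset by simp
  then show ?thesis using cInf_less_iff[OF cnset_nonempty[OF t] cnset_bdd] by blast
qed

lemma cn_mono_map: assumes ne: "cnset n m t \<noteq> {}"
  and h: "\<And>x. x \<in> cnset n m t \<Longrightarrow> \<exists>y\<in>cnset n' m' t'. y \<le> x"
  shows "cross_norm n' m' t' \<le> cross_norm n m t"
  unfolding cn_cnset by (rule cInf_mono[OF ne cnset_bdd h])

lemma trace_decomp: assumes u: "\<And>i. i < N \<Longrightarrow> u i \<in> carrier_mat n n" and v: "\<And>i. i < N \<Longrightarrow> v i \<in> carrier_mat m m"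
  shows "mtrace (msum (n*m) (n*m) N (\<lambda>i. kron (u i) (v i))) = (\<Sum>i<N. mtrace (u i) * mtrace (v i))"
proof -
  have "mtrace (msum (n*m) (n*m) N (\<lambda>i. kron (u i) (v i))) = (\<Sum>i<N. mtrace (kron (u i) (v i)))"
    using u v by (intro mtrace_msum) auto
  also have "\<dots> = (\<Sum>i<N. mtrace (u i) * mtrace (v i))" by (intro sum.cong refl) (simp add: mtrace_kron[OF u v])
  finally show ?thesis .
qed

lemma cn_ge1: assumes t: "t \<in> carrier_mat (n*m) (n*m)" and tr: "mtrace t = 1"
  shows "1 \<le> cross_norm n m t"
  unfolding cn_cnset
proof (rule cInf_greatest[OF cnset_nonempty[OF t]])
  fix x assume "x \<in> cnset n m t"
  then obtain N u v where u: "\<And>i. i < N \<Longrightarrow> u i \<in> carrier_mat n n" and v: "\<And>i. i < N \<Longrightarrow> v i \<in> carrier_mat m m"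
    and td: "t = msum (n*m) (n*m) N (\<lambda>i. kron (u i) (v i))" and x: "x = (\<Sum>i<N. trace_norm (u i) * trace_norm (v i))"
    by (rule cnsetE) blast
  have "1 = cmod (mtrace t)" using tr by simp
  also have "\<dots> = cmod (\<Sum>i<N. mtrace (u i) * mtrace (v i))" unfolding td using trace_decomp[OF u v] by simp
  also have "\<dots> \<le> (\<Sum>i<N. cmod (mtrace (u i)) * cmod (mtrace (v i)))"
    by (rule order_trans[OF norm_sum]) (simp add: norm_mult)
  also have "\<dots> \<le> x" unfolding x
  proof (rule sum_mono)
    fix i assume "i \<in> {..<N}"
    then have i: "i < N" by simp
    show "cmod (mtrace (u i)) * cmod (mtrace (v i)) \<le> trace_norm (u i) * trace_norm (v i)"
      by (rule mult_mono[OF tn_trace_bound[OF u[OF i]] tn_trace_bound[OF v[OF i]] tn_nonneg[OF u[OF i]]]) simp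
  qed
  finally show "1 \<le> x" .
qed

lemma msum_cong: "(\<And>i. i < N \<Longrightarrow> F i = G i) \<Longrightarrow> msum r c N F = msum r c N G"
  unfolding msum_def by (intro cong_mat refl) (auto intro!: sum.cong)

lemma cn_convex: assumes s: "s \<in> carrier_mat (n*m) (n*m)" and t: "t \<in> carrier_mat (n*m) (n*m)"
  and p: "0 \<le> p" "p \<le> 1"
  shows "cross_norm n m (complex_of_real p \<cdot>\<^sub>m s + complex_of_real (1 - p) \<cdot>\<^sub>m t)
    \<le> p * cross_norm n m s + (1 - p) * cross_norm n m t"
proof (rule field_le_epsilon)
  fix e :: real assume e: "0 < e"
  obtain x1 where x1: "x1 \<in> cnset n m s" "x1 < cross_norm n m s + e" using cn_approx[OF s e] by blast
  obtain x2 where x2: "x2 \<in> cnset n m t" "x2 < cross_norm n m t + e" using cn_approx[OF t e] by blast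
  obtain N1 u1 v1 where u1: "\<And>i. i < N1 \<Longrightarrow> u1 i \<in> carrier_mat n n" and v1: "\<And>i. i < N1 \<Longrightarrow> v1 i \<in> carrier_mat m m"
    and sd: "s = msum (n*m) (n*m) N1 (\<lambda>i. kron (u1 i) (v1 i))" and x1d: "x1 = (\<Sum>i<N1. trace_norm (u1 i) * trace_norm (v1 i))"
    by (rule cnsetE[OF x1(1)]) blast
  obtain N2 u2 v2 where u2: "\<And>i. i < N2 \<Longrightarrow> u2 i \<in> carrier_mat n n" and v2: "\<And>i. i < N2 \<Longrightarrow> v2 i \<in> carrier_mat m m"
    and td: "t = msum (n*m) (n*m) N2 (\<lambda>i. kron (u2 i) (v2 i))" and x2d: "x2 = (\<Sum>i<N2. trace_norm (u2 i) * trace_norm (v2 i))"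
    by (rule cnsetE[OF x2(1)]) blast
  define u where "u = (\<lambda>i. if i < N1 then complex_of_real p \<cdot>\<^sub>m u1 i else complex_of_real (1 - p) \<cdot>\<^sub>m u2 (i - N1))"
  define v where "v = (\<lambda>i. if i < N1 then v1 i else v2 (i - N1))"
  have uv: "u i \<in> carrier_mat n n \<and> v i \<in> carrier_mat m m" if "i < N1 + N2" for i
    using that u1 v1 u2 v2 unfolding u_def v_def by auto
  have "complex_of_real p \<cdot>\<^sub>m s + complex_of_real (1 - p) \<cdot>\<^sub>m t = msum (n*m) (n*m) (N1 + N2) (\<lambda>i. kron (u i) (v i))"
  proof -
    have "msum (n*m) (n*m) (N1 + N2) (\<lambda>i. kron (u i) (v i)) =
      msum (n*m) (n*m) N1 (\<lambda>i. complex_of_real p \<cdot>\<^sub>m kron (u1 i) (v1 i)) + msum (n*m) (n*m) N2 (\<lambda>i. complex_of_real (1 - p) \<cdot>\<^sub>m kron (u2 i) (v2 i))"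
      unfolding msum_concat u_def v_def
      by (intro arg_cong2[where f="(+)"] msum_cong) (auto simp: kron_smult_left)
    also have "\<dots> = complex_of_real p \<cdot>\<^sub>m s + complex_of_real (1 - p) \<cdot>\<^sub>m t"
      unfolding sd td using u1 v1 u2 v2 by (simp add: msum_smult)
    finally show ?thesis by simp
  qed
  moreover have "(\<Sum>i<N1 + N2. trace_norm (u i) * trace_norm (v i)) = p * x1 + (1 - p) * x2"
  proof -
    have a: "trace_norm (complex_of_real p \<cdot>\<^sub>m u1 i) = p * trace_norm (u1 i)" if "i < N1" for i
      using tn_smult[OF u1[OF that]] p by simp
    have b: "trace_norm ((1 - complex_of_real p) \<cdot>\<^sub>m u2 i) = (1 - p) * trace_norm (u2 i)" if "i < N2" for i
    proof -
      have "1 - complex_of_real p = complex_of_real (1 - p)" by simp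
      then show ?thesis using tn_smult[OF u2[OF that], of "1 - complex_of_real p"] p by (simp del: of_real_diff)
    qed
    have "(\<Sum>i<N1 + N2. trace_norm (u i) * trace_norm (v i)) = (\<Sum>i<N1. trace_norm (u i) * trace_norm (v i)) + (\<Sum>i<N2. trace_norm (u (N1+i)) * trace_norm (v (N1+i)))"
      by (rule sum_lt_add)
    also have "(\<Sum>i<N1. trace_norm (u i) * trace_norm (v i)) = (\<Sum>i<N1. p * (trace_norm (u1 i) * trace_norm (v1 i)))"
      by (intro sum.cong refl) (simp add: u_def v_def a)
    also have "(\<Sum>i<N2. trace_norm (u (N1+i)) * trace_norm (v (N1+i))) = (\<Sum>i<N2. (1 - p) * (trace_norm (u2 i) * trace_norm (v2 i)))"
      by (intro sum.cong refl) (simp add: u_def v_def b)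
    finally show ?thesis unfolding x1d x2d by (simp add: sum_distrib_left)
  qed
  ultimately have "p * x1 + (1 - p) * x2 \<in> cnset n m (complex_of_real p \<cdot>\<^sub>m s + complex_of_real (1 - p) \<cdot>\<^sub>m t)"
    by (intro cnsetI[of "N1 + N2" u n v m]) (use uv in auto)
  then have "cross_norm n m (complex_of_real p \<cdot>\<^sub>m s + complex_of_real (1 - p) \<cdot>\<^sub>m t) \<le> p * x1 + (1 - p) * x2"
    by (rule cn_lower)
  also have "\<dots> \<le> p * (cross_norm n m s + e) + (1 - p) * (cross_norm n m t + e)"
    using x1(2) x2(2) p by (intro add_mono mult_left_mono) auto
  also have "\<dots> = p * cross_norm n m s + (1 - p) * cross_norm n m t + e" by (simp add: algebra_simps)
  finally show "cross_norm n m (complex_of_real p \<cdot>\<^sub>m s + complex_of_real (1 - p) \<cdot>\<^sub>m t)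
    \<le> p * cross_norm n m s + (1 - p) * cross_norm n m t + e" .
qed


section \<open>Separable states\<close>

lemma densityD: "density n A \<Longrightarrow> psd n A" "density n A \<Longrightarrow> mtrace A = 1" "density n A \<Longrightarrow> A \<in> carrier_mat n n"
  unfolding density_def using psdD(3) by auto

lemma tn_density: "density n A \<Longrightarrow> trace_norm A = 1"
  using tn_psd[OF densityD(1)] densityD(2) by simp

lemma cn_separable: assumes d: "density (n*m) \<sigma>" and sep: "separable n m \<sigma>" shows "cross_norm n m \<sigma> = 1"
proof -
  obtain N \<omega> \<rho>1 \<rho>2 where h: "\<forall>i<N. 0 < \<omega> i \<and> density n (\<rho>1 i) \<and> density m (\<rho>2 i)"
    and sd: "\<sigma> = msum (n*m) (n*m) N (\<lambda>i. complex_of_real (\<omega> i) \<cdot>\<^sub>m kron (\<rho>1 i) (\<rho>2 i))"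
    using sep unfolding separable_def by blast
  define u where "u = (\<lambda>i. complex_of_real (\<omega> i) \<cdot>\<^sub>m \<rho>1 i)"
  have c1: "\<rho>1 i \<in> carrier_mat n n" "\<rho>2 i \<in> carrier_mat m m" if "i < N" for i using h that densityD(3) by auto
  have uc: "u i \<in> carrier_mat n n" if "i < N" for i unfolding u_def using c1[OF that] by simp
  have sd2: "\<sigma> = msum (n*m) (n*m) N (\<lambda>i. kron (u i) (\<rho>2 i))"
    unfolding sd u_def by (rule msum_cong) (simp add: kron_smult_left)
  have cost: "(\<Sum>i<N. trace_norm (u i) * trace_norm (\<rho>2 i)) = (\<Sum>i<N. \<omega> i)"
  proof (intro sum.cong refl)
    fix i assume "i \<in> {..<N}" then have i: "i < N" by simp
    show "trace_norm (u i) * trace_norm (\<rho>2 i) = \<omega> i"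
      unfolding u_def using tn_smult[OF c1(1)[OF i]] h i tn_density by auto
  qed
  have "1 = mtrace \<sigma>" using densityD(2)[OF d] by simp
  also have "\<dots> = (\<Sum>i<N. mtrace (u i) * mtrace (\<rho>2 i))" unfolding sd2 by (rule trace_decomp[OF uc c1(2)])
  also have "\<dots> = (\<Sum>i<N. complex_of_real (\<omega> i))"
  proof (intro sum.cong refl)
    fix i assume "i \<in> {..<N}" then have i: "i < N" by simp
    show "mtrace (u i) * mtrace (\<rho>2 i) = complex_of_real (\<omega> i)"
      unfolding u_def using mtrace_smult[OF c1(1)[OF i]] h i densityD(2) by auto
  qed
  finally have s1: "(\<Sum>i<N. \<omega> i) = 1" by (metis of_real_eq_1_iff of_real_sum)
  have "(\<Sum>i<N. trace_norm (u i) * trace_norm (\<rho>2 i)) \<in> cnset n m \<sigma>"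
    by (rule cnsetI[OF _ sd2 refl]) (use uc c1 in auto)
  then have "cross_norm n m \<sigma> \<le> 1" using cn_lower cost s1 by fastforce
  moreover have "1 \<le> cross_norm n m \<sigma>" using cn_ge1[OF densityD(3)[OF d] densityD(2)[OF d]] .
  ultimately show ?thesis by simp
qed

section \<open>Isometric embeddings\<close>

lemma kron_conj: assumes X1: "X1 \<in> carrier_mat n' n" and X2: "X2 \<in> carrier_mat m' m"
  and u: "u \<in> carrier_mat n n" and v: "v \<in> carrier_mat m m"
  shows "kron X1 X2 * kron u v * adj (kron X1 X2) = kron (X1 * u * adj X1) (X2 * v * adj X2)"
proof -
  have "kron X1 X2 * kron u v = kron (X1 * u) (X2 * v)" by (rule kron_mult[OF X1 X2 u v])
  moreover have "kron (X1 * u) (X2 * v) * kron (adj X1) (adj X2) = kron (X1 * u * adj X1) (X2 * v * adj X2)"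
    by (rule kron_mult) (use X1 X2 u v in auto)
  ultimately show ?thesis unfolding adj_kron by simp
qed

lemma transport: assumes X1: "X1 \<in> carrier_mat n' n" and X2: "X2 \<in> carrier_mat m' m"
  and u: "\<And>i. i < N \<Longrightarrow> u i \<in> carrier_mat n n" and v: "\<And>i. i < N \<Longrightarrow> v i \<in> carrier_mat m m"
  shows "kron X1 X2 * msum (n*m) (n*m) N (\<lambda>i. kron (u i) (v i)) * adj (kron X1 X2)
    = msum (n'*m') (n'*m') N (\<lambda>i. kron (X1 * u i * adj X1) (X2 * v i * adj X2))"
proof -
  have K: "kron X1 X2 \<in> carrier_mat (n'*m') (n*m)" using X1 X2 by simp
  have "kron X1 X2 * msum (n*m) (n*m) N (\<lambda>i. kron (u i) (v i)) = msum (n'*m') (n*m) N (\<lambda>i. kron X1 X2 * kron (u i) (v i))"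
    by (rule msum_mult_left[OF K]) (use u v in simp)
  moreover have "msum (n'*m') (n*m) N (\<lambda>i. kron X1 X2 * kron (u i) (v i)) * adj (kron X1 X2)
      = msum (n'*m') (n'*m') N (\<lambda>i. kron X1 X2 * kron (u i) (v i) * adj (kron X1 X2))"
    by (rule msum_mult_right) (use K u v in simp_all)
  moreover have "msum (n'*m') (n'*m') N (\<lambda>i. kron X1 X2 * kron (u i) (v i) * adj (kron X1 X2))
      = msum (n'*m') (n'*m') N (\<lambda>i. kron (X1 * u i * adj X1) (X2 * v i * adj X2))"
    by (rule msum_cong) (rule kron_conj[OF X1 X2 u v])
  ultimately show ?thesis by (simp del: massoc)
qed

lemma cn_iso: assumes s: "\<sigma> \<in> carrier_mat (n*m) (n*m)" and V1: "isometry n n' V1" and V2: "isometry m m' V2"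
  shows "cross_norm n' m' (kron V1 V2 * \<sigma> * adj (kron V1 V2)) = cross_norm n m \<sigma>"
proof -
  have V1c: "V1 \<in> carrier_mat n' n" "adj V1 * V1 = 1\<^sub>m n" using isometryD[OF V1] by auto
  have V2c: "V2 \<in> carrier_mat m' m" "adj V2 * V2 = 1\<^sub>m m" using isometryD[OF V2] by auto
  define K where "K = kron V1 V2"
  have Kc: "K \<in> carrier_mat (n'*m') (n*m)" unfolding K_def using V1c V2c by simp
  have KK: "adj K * K = 1\<^sub>m (n*m)" unfolding K_def adj_kron
    using kron_mult[of "adj V1" n n' "adj V2" m m' V1 n V2 m] V1c V2c by (simp add: kron_one)
  define sg2 where "sg2 = K * \<sigma> * adj K"
  have s': "sg2 \<in> carrier_mat (n'*m') (n'*m')" unfolding sg2_def using Kc s by simp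
  have sback: "\<sigma> = adj K * sg2 * K" unfolding sg2_def using Kc s KK by simp
  have le1: "cross_norm n' m' sg2 \<le> cross_norm n m \<sigma>"
  proof (rule cn_mono_map[OF cnset_nonempty[OF s]])
    fix x assume "x \<in> cnset n m \<sigma>"
    then obtain N u v where u: "\<And>i. i < N \<Longrightarrow> u i \<in> carrier_mat n n" and v: "\<And>i. i < N \<Longrightarrow> v i \<in> carrier_mat m m"
      and sd: "\<sigma> = msum (n*m) (n*m) N (\<lambda>i. kron (u i) (v i))" and x: "x = (\<Sum>i<N. trace_norm (u i) * trace_norm (v i))"
      by (rule cnsetE) blast
    have "sg2 = msum (n'*m') (n'*m') N (\<lambda>i. kron (V1 * u i * adj V1) (V2 * v i * adj V2))"
      unfolding sg2_def K_def sd by (rule transport[OF V1c(1) V2c(1) u v])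
    then have "(\<Sum>i<N. trace_norm (V1 * u i * adj V1) * trace_norm (V2 * v i * adj V2)) \<in> cnset n' m' sg2"
      by (intro cnsetI[of N _ n' _ m']) (use V1c V2c u v in auto)
    moreover have "(\<Sum>i<N. trace_norm (V1 * u i * adj V1) * trace_norm (V2 * v i * adj V2)) \<le> x"
      unfolding x
    proof (rule sum_mono)
      fix i assume "i \<in> {..<N}" then have i: "i < N" by simp
      show "trace_norm (V1 * u i * adj V1) * trace_norm (V2 * v i * adj V2) \<le> trace_norm (u i) * trace_norm (v i)"
        by (rule mult_mono[OF isometry_tn1[OF V1 u[OF i]] isometry_tn1[OF V2 v[OF i]] tn_nonneg[OF u[OF i]] tn_nonneg[of "V2 * v i * adj V2" m']]) (use V2c v[OF i] in simp)
    qed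
    ultimately show "\<exists>y\<in>cnset n' m' sg2. y \<le> x" by blast
  qed
  have le2: "cross_norm n m \<sigma> \<le> cross_norm n' m' sg2"
  proof (rule cn_mono_map[OF cnset_nonempty[OF s']])
    fix x assume "x \<in> cnset n' m' sg2"
    then obtain N u v where u: "\<And>i. i < N \<Longrightarrow> u i \<in> carrier_mat n' n'" and v: "\<And>i. i < N \<Longrightarrow> v i \<in> carrier_mat m' m'"
      and sd: "sg2 = msum (n'*m') (n'*m') N (\<lambda>i. kron (u i) (v i))" and x: "x = (\<Sum>i<N. trace_norm (u i) * trace_norm (v i))"
      by (rule cnsetE) blast
    have "\<sigma> = kron (adj V1) (adj V2) * sg2 * adj (kron (adj V1) (adj V2))"
      unfolding sback K_def adj_kron by simp
    also have "\<dots> = msum (n*m) (n*m) N (\<lambda>i. kron (adj V1 * u i * adj (adj V1)) (adj V2 * v i * adj (adj V2)))"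
      unfolding sd by (rule transport) (use V1c V2c u v in auto)
    finally have sd2: "\<sigma> = msum (n*m) (n*m) N (\<lambda>i. kron (adj V1 * u i * V1) (adj V2 * v i * V2))" by simp
    then have "(\<Sum>i<N. trace_norm (adj V1 * u i * V1) * trace_norm (adj V2 * v i * V2)) \<in> cnset n m \<sigma>"
      by (intro cnsetI[of N _ n _ m]) (use V1c V2c u v in auto)
    moreover have "(\<Sum>i<N. trace_norm (adj V1 * u i * V1) * trace_norm (adj V2 * v i * V2)) \<le> x"
      unfolding x
    proof (rule sum_mono)
      fix i assume "i \<in> {..<N}" then have i: "i < N" by simp
      show "trace_norm (adj V1 * u i * V1) * trace_norm (adj V2 * v i * V2) \<le> trace_norm (u i) * trace_norm (v i)"
        by (rule mult_mono[OF isometry_tn2[OF V1 u[OF i]] isometry_tn2[OF V2 v[OF i]] tn_nonneg[OF u[OF i]] tn_nonneg[of "adj V2 * v i * V2" m]]) (use V2c v[OF i] in simp)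
    qed
    ultimately show "\<exists>y\<in>cnset n m \<sigma>. y \<le> x" by blast
  qed
  show ?thesis using le1 le2 unfolding sg2_def K_def by simp
qed


section \<open>Linear maps on matrix units\<close>

lemma msum_zero: "msum r c 0 F = 0\<^sub>m r c" by (rule eq_matI) auto

lemma msum_Suc: "F N \<in> carrier_mat r c \<Longrightarrow> msum r c (Suc N) F = msum r c N F + F N"
  by (rule eq_matI) auto

lemma op_zero: assumes T: "operation n n' T" shows "T (0\<^sub>m n n) = 0\<^sub>m n' n'"
proof -
  have "(0::complex) \<cdot>\<^sub>m 0\<^sub>m n n = 0\<^sub>m n n" by (rule eq_matI) auto
  then have "T (0\<^sub>m n n) = 0 \<cdot>\<^sub>m T (0\<^sub>m n n)" using operationD(3)[OF T, of "0\<^sub>m n n" 0] by simp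
  also have "\<dots> = 0\<^sub>m n' n'" using operationD(1)[OF T, of "0\<^sub>m n n"] by (intro eq_matI) auto
  finally show ?thesis .
qed

lemma op_msum: assumes T: "operation n n' T" and F: "\<And>i. i < N \<Longrightarrow> F i \<in> carrier_mat n n"
  shows "T (msum n n N F) = msum n' n' N (\<lambda>i. T (F i))"
  using F
proof (induction N)
  case 0 then show ?case using op_zero[OF T] by (simp add: msum_zero)
next
  case (Suc N)
  have FN: "F N \<in> carrier_mat n n" using Suc.prems by simp
  have "T (msum n n (Suc N) F) = T (msum n n N F + F N)" by (simp add: msum_Suc[where F=F and N=N, OF FN])
  also have "\<dots> = T (msum n n N F) + T (F N)" using operationD(2)[OF T _ FN, of "msum n n N F"] by simp
  also have "\<dots> = msum n' n' N (\<lambda>i. T (F i)) + T (F N)" using Suc by simp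
  also have "\<dots> = msum n' n' (Suc N) (\<lambda>i. T (F i))"
    using operationD(1)[OF T FN] by (simp add: msum_Suc[where F="\<lambda>i. T (F i)" and N=N])
  finally show ?case .
qed

lemma mat_expand: assumes u: "u \<in> carrier_mat n n"
  shows "u = msum n n (n*n) (\<lambda>q. u $$ (q div n, q mod n) \<cdot>\<^sub>m munit n (q div n) (q mod n))"
proof (rule eq_matI)
  fix i j assume "i < dim_row (msum n n (n*n) (\<lambda>q. u $$ (q div n, q mod n) \<cdot>\<^sub>m munit n (q div n) (q mod n)))"
    "j < dim_col (msum n n (n*n) (\<lambda>q. u $$ (q div n, q mod n) \<cdot>\<^sub>m munit n (q div n) (q mod n)))"
  then have ij: "i < n" "j < n" by auto
  have "msum n n (n*n) (\<lambda>q. u $$ (q div n, q mod n) \<cdot>\<^sub>m munit n (q div n) (q mod n)) $$ (i,j)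
      = (\<Sum>q<n*n. (u $$ (q div n, q mod n) \<cdot>\<^sub>m munit n (q div n) (q mod n)) $$ (i,j))"
    by (rule msum_idx) (use ij in auto)
  also have "\<dots> = (\<Sum>q<n*n. if q = i*n+j then u $$ (i,j) else 0)"
  proof (intro sum.cong refl)
    fix q assume "q \<in> {..<n*n}"
    then have q: "q div n < n" "q mod n < n" using divmod_lt by auto
    have iff: "(i = q div n \<and> j = q mod n) \<longleftrightarrow> q = i*n+j" using ij by (metis div_mult_mod_eq add.commute mult.commute div_mult_self2 mod_mult_self2 div_less mod_less add_0_left less_nat_zero_code)
    show "(u $$ (q div n, q mod n) \<cdot>\<^sub>m munit n (q div n) (q mod n)) $$ (i,j) = (if q = i*n+j then u $$ (i,j) else 0)"
      using q ij iff by auto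
  qed
  also have "\<dots> = u $$ (i,j)" using ij by simp
  finally show "u $$ (i,j) = msum n n (n*n) (\<lambda>q. u $$ (q div n, q mod n) \<cdot>\<^sub>m munit n (q div n) (q mod n)) $$ (i,j)" by simp
qed (use u in auto)

lemma op_expand: assumes T: "operation n n' T" and u: "u \<in> carrier_mat n n" and ab: "a < n'" "b < n'"
  shows "T u $$ (a,b) = (\<Sum>i<n. \<Sum>j<n. u $$ (i,j) * T (munit n i j) $$ (a,b))"
proof -
  have "T u = msum n' n' (n*n) (\<lambda>q. T (u $$ (q div n, q mod n) \<cdot>\<^sub>m munit n (q div n) (q mod n)))"
    by (subst mat_expand[OF u], rule op_msum[OF T]) simp
  also have "\<dots> = msum n' n' (n*n) (\<lambda>q. u $$ (q div n, q mod n) \<cdot>\<^sub>m T (munit n (q div n) (q mod n)))"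
    by (rule msum_cong) (simp add: operationD(3)[OF T])
  finally have "T u $$ (a,b) = (\<Sum>q<n*n. (u $$ (q div n, q mod n) \<cdot>\<^sub>m T (munit n (q div n) (q mod n))) $$ (a,b))"
    using ab by simp
  also have "\<dots> = (\<Sum>i<n. \<Sum>j<n. (u $$ (i,j) \<cdot>\<^sub>m T (munit n i j)) $$ (a,b))"
    by (simp add: sum_lt_mult)
  also have "\<dots> = (\<Sum>i<n. \<Sum>j<n. u $$ (i,j) * T (munit n i j) $$ (a,b))"
  proof (intro sum.cong refl)
    fix x y
    have "T (munit n x y) \<in> carrier_mat n' n'" using operationD(1)[OF T munit_carrier] .
    then show "(u $$ (x,y) \<cdot>\<^sub>m T (munit n x y)) $$ (a,b) = u $$ (x,y) * T (munit n x y) $$ (a,b)"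
      using ab by simp
  qed
  finally show ?thesis .
qed

lemma tensor_map_decomp:
  assumes T1: "operation n n' T1" and T2: "operation m m' T2"
  and u: "\<And>i. i < N \<Longrightarrow> u i \<in> carrier_mat n n" and v: "\<And>i. i < N \<Longrightarrow> v i \<in> carrier_mat m m"
  shows "tensor_map n m n' m' T1 T2 (msum (n*m) (n*m) N (\<lambda>i. kron (u i) (v i)))
    = msum (n'*m') (n'*m') N (\<lambda>p. kron (T1 (u p)) (T2 (v p)))"
proof (rule eq_matI)
  fix r s assume "r < dim_row (msum (n'*m') (n'*m') N (\<lambda>p. kron (T1 (u p)) (T2 (v p))))"
    "s < dim_col (msum (n'*m') (n'*m') N (\<lambda>p. kron (T1 (u p)) (T2 (v p))))"
  then have rs: "r < n'*m'" "s < n'*m'" by auto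
  define a where "a = r div m'"
  define a' where "a' = r mod m'"
  define b where "b = s div m'"
  define b' where "b' = s mod m'"
  have ab: "a < n'" "a' < m'" "b < n'" "b' < m'" using rs divmod_lt unfolding a_def a'_def b_def b'_def by auto
  note T1c = operationD(1)[OF T1] and T2c = operationD(1)[OF T2]
  define g where "g = (\<lambda>i j k l p. u p $$ (i,j) * T1 (munit n i j) $$ (a,b) * (v p $$ (k,l) * T2 (munit m k l) $$ (a',b')))"
  have L: "tensor_map n m n' m' T1 T2 (msum (n*m) (n*m) N (\<lambda>i. kron (u i) (v i))) $$ (r,s)
      = (\<Sum>i<n. \<Sum>j<n. \<Sum>k<m. \<Sum>l<m. \<Sum>p<N. g i j k l p)"
  proof -
    have "tensor_map n m n' m' T1 T2 (msum (n*m) (n*m) N (\<lambda>i. kron (u i) (v i))) $$ (r,s)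
      = (\<Sum>i<n. \<Sum>j<n. \<Sum>k<m. \<Sum>l<m. msum (n*m) (n*m) N (\<lambda>i. kron (u i) (v i)) $$ (i*m+k, j*m+l) *
          kron (T1 (munit n i j)) (T2 (munit m k l)) $$ (r,s))"
      using rs unfolding tensor_map_def by simp
    also have "\<dots> = (\<Sum>i<n. \<Sum>j<n. \<Sum>k<m. \<Sum>l<m. \<Sum>p<N. g i j k l p)"
    proof (intro sum.cong refl)
      fix i j k l assume ijkl: "i \<in> {..<n}" "j \<in> {..<n}" "k \<in> {..<m}" "l \<in> {..<m}"
      have e1: "msum (n*m) (n*m) N (\<lambda>i. kron (u i) (v i)) $$ (i*m+k, j*m+l) = (\<Sum>p<N. u p $$ (i,j) * v p $$ (k,l))"
      proof -
        have "msum (n*m) (n*m) N (\<lambda>i. kron (u i) (v i)) $$ (i*m+k, j*m+l) = (\<Sum>p<N. kron (u p) (v p) $$ (i*m+k, j*m+l))"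
          using ijkl by simp
        also have "\<dots> = (\<Sum>p<N. u p $$ (i,j) * v p $$ (k,l))"
        proof (intro sum.cong refl)
          fix p assume "p \<in> {..<N}" then have p: "p < N" by simp
          show "kron (u p) (v p) $$ (i*m+k, j*m+l) = u p $$ (i,j) * v p $$ (k,l)"
            using ijkl by (subst kron_idx'[OF u[OF p] v[OF p]]) auto
        qed
        finally show ?thesis .
      qed
      have e2: "kron (T1 (munit n i j)) (T2 (munit m k l)) $$ (r,s) = T1 (munit n i j) $$ (a,b) * T2 (munit m k l) $$ (a',b')"
        unfolding a_def a'_def b_def b'_def using rs T1c T2c by (intro kron_idx') auto
      show "msum (n*m) (n*m) N (\<lambda>i. kron (u i) (v i)) $$ (i*m+k, j*m+l) * kron (T1 (munit n i j)) (T2 (munit m k l)) $$ (r,s)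
        = (\<Sum>p<N. g i j k l p)"
        unfolding e1 e2 g_def by (simp add: sum_distrib_left sum_distrib_right ac_simps)
    qed
    finally show ?thesis .
  qed
  have R: "msum (n'*m') (n'*m') N (\<lambda>p. kron (T1 (u p)) (T2 (v p))) $$ (r,s)
      = (\<Sum>p<N. \<Sum>i<n. \<Sum>j<n. \<Sum>k<m. \<Sum>l<m. g i j k l p)"
  proof -
    have "msum (n'*m') (n'*m') N (\<lambda>p. kron (T1 (u p)) (T2 (v p))) $$ (r,s) = (\<Sum>p<N. kron (T1 (u p)) (T2 (v p)) $$ (r,s))"
      using rs by simp
    also have "\<dots> = (\<Sum>p<N. \<Sum>i<n. \<Sum>j<n. \<Sum>k<m. \<Sum>l<m. g i j k l p)"
    proof (intro sum.cong refl)
      fix p assume "p \<in> {..<N}" then have p: "p < N" by simp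
      have "kron (T1 (u p)) (T2 (v p)) $$ (r,s) = T1 (u p) $$ (a,b) * T2 (v p) $$ (a',b')"
        unfolding a_def a'_def b_def b'_def using rs T1c[OF u[OF p]] T2c[OF v[OF p]] by (intro kron_idx') auto
      also have "\<dots> = (\<Sum>i<n. \<Sum>j<n. u p $$ (i,j) * T1 (munit n i j) $$ (a,b)) * (\<Sum>k<m. \<Sum>l<m. v p $$ (k,l) * T2 (munit m k l) $$ (a',b'))"
        using op_expand[OF T1 u[OF p] ab(1,3)] op_expand[OF T2 v[OF p] ab(2,4)] by simp
      also have "\<dots> = (\<Sum>i<n. \<Sum>j<n. \<Sum>k<m. \<Sum>l<m. g i j k l p)"
        unfolding g_def by (simp only: sum_distrib_right) (simp only: sum_distrib_left)
      finally show "kron (T1 (u p)) (T2 (v p)) $$ (r,s) = (\<Sum>i<n. \<Sum>j<n. \<Sum>k<m. \<Sum>l<m. g i j k l p)" .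
    qed
    finally show ?thesis .
  qed
  have swap: "(\<Sum>i<n. \<Sum>j<n. \<Sum>k<m. \<Sum>l<m. \<Sum>p<N. g i j k l p) = (\<Sum>p<N. \<Sum>i<n. \<Sum>j<n. \<Sum>k<m. \<Sum>l<m. g i j k l p)"
    by (simp only: sum.swap[where B="{..<N}"])
  show "tensor_map n m n' m' T1 T2 (msum (n*m) (n*m) N (\<lambda>i. kron (u i) (v i))) $$ (r,s)
      = msum (n'*m') (n'*m') N (\<lambda>p. kron (T1 (u p)) (T2 (v p))) $$ (r,s)"
    unfolding L R swap ..
qed (auto simp: tensor_map_def)


section \<open>Trace preservation on all matrices\<close>

lemma sum_delta2: fixes f :: "nat \<Rightarrow> nat \<Rightarrow> complex" assumes "i < n" "j < n"
  shows "(\<Sum>a<n. \<Sum>b<n. if a = i \<and> b = j then f a b else 0) = f i j"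
proof -
  have "(\<Sum>a<n. \<Sum>b<n. if a = i \<and> b = j then f a b else 0) = (\<Sum>a<n. if a = i then f a j else 0)"
  proof (intro sum.cong refl)
    fix a show "(\<Sum>b<n. if a = i \<and> b = j then f a b else 0) = (if a = i then f a j else 0)"
      using assms by (cases "a = i") (auto simp: sum.delta)
  qed
  also have "\<dots> = f i j" using assms by simp
  finally show ?thesis .
qed

lemma bf_munit: "i < n \<Longrightarrow> j < n \<Longrightarrow> bf n (munit n i j) x y = cnj (x i) * y j"
  unfolding bf_def by (simp add: sum_delta2[of i n j "\<lambda>a b. cnj (x a) * 1 * y b"])

lemma psd_of_bf: "A \<in> carrier_mat n n \<Longrightarrow> (\<And>x. \<exists>z. bf n A x x = cnj z * z) \<Longrightarrow> psd n A"
  unfolding psd_iff by (metis cnj_mult_self Im_complex_of_real Re_complex_of_real zero_le_power2)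

lemma tp_trace_munit: assumes T: "tp_operation n n' T" and i: "i < n" and j: "j < n"
  shows "mtrace (T (munit n i j)) = (if i = j then 1 else 0)"
proof -
  have op: "operation n n' T" using T unfolding tp_operation_def by simp
  have tp: "\<And>A. psd n A \<Longrightarrow> mtrace (T A) = mtrace A" using T unfolding tp_operation_def by simp
  have tr_munit: "mtrace (munit n a b) = (if a = b then 1 else 0)" if "a < n" "b < n" for a b
    unfolding mtrace_def using that by simp
  have pdiag: "psd n (munit n a a)" if "a < n" for a
    by (rule psd_of_bf) (use that in \<open>auto simp: bf_munit\<close>)
  have tdiag: "mtrace (T (munit n a a)) = 1" if "a < n" for a using tp[OF pdiag[OF that]] tr_munit[OF that that] by simp
  note Tc = operationD(1)[OF op munit_carrier]
  show ?thesis
  proof (cases "i = j")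
    case True then show ?thesis using tdiag i by simp
  next
    case False
    define F where "F = munit n i i + munit n j j + munit n i j + munit n j i"
    define G where "G = munit n i i + munit n j j + (- \<i>) \<cdot>\<^sub>m munit n i j + \<i> \<cdot>\<^sub>m munit n j i"
    have Fc: "F \<in> carrier_mat n n" "G \<in> carrier_mat n n" unfolding F_def G_def by auto
    have pF: "psd n F"
    proof (rule psd_of_bf[OF Fc(1)])
      fix x show "\<exists>z. bf n F x x = cnj z * z"
        by (rule exI[of _ "x i + x j"]) (simp add: F_def bf_add_mat bf_munit i j algebra_simps)
    qed
    have pG: "psd n G"
    proof (rule psd_of_bf[OF Fc(2)])
      fix x show "\<exists>z. bf n G x x = cnj z * z"
        by (rule exI[of _ "x i - \<i> * x j"]) (simp add: G_def bf_add_mat bf_smult_mat bf_munit i j algebra_simps)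
    qed
    have TF: "T F = T (munit n i i) + T (munit n j j) + T (munit n i j) + T (munit n j i)"
      unfolding F_def by (simp add: operationD(2)[OF op])
    have TG: "T G = T (munit n i i) + T (munit n j j) + (- \<i>) \<cdot>\<^sub>m T (munit n i j) + \<i> \<cdot>\<^sub>m T (munit n j i)"
      unfolding G_def by (simp add: operationD(2)[OF op] operationD(3)[OF op])
    have trF: "mtrace F = 2" unfolding F_def using i j False
      by (simp add: mtrace_add[of _ n] tr_munit)
    have trG: "mtrace G = 2" unfolding G_def using i j False
      by (simp add: mtrace_add[of _ n] mtrace_smult[of _ n] tr_munit)
    have e1: "1 + 1 + mtrace (T (munit n i j)) + mtrace (T (munit n j i)) = 2"
      using tp[OF pF] trF unfolding TF using Tc tdiag i j by (simp add: mtrace_add[of _ n'])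
    have e2: "1 + 1 + (- \<i>) * mtrace (T (munit n i j)) + \<i> * mtrace (T (munit n j i)) = 2"
      using tp[OF pG] trG unfolding TG using Tc tdiag i j by (simp add: mtrace_add[of _ n'] mtrace_smult[of _ n'])
    have "mtrace (T (munit n i j)) = 0"
    proof -
      define a where "a = mtrace (T (munit n i j))"
      define b where "b = mtrace (T (munit n j i))"
      have "a + b = 0" using e1 unfolding a_def b_def by simp
      moreover have "\<i> * (b - a) = 0" using e2 unfolding a_def b_def by (simp add: algebra_simps)
      ultimately show ?thesis unfolding a_def[symmetric] by simp
    qed
    then show ?thesis using False by simp
  qed
qed

lemma tp_trace: assumes T: "tp_operation n n' T" and u: "u \<in> carrier_mat n n"
  shows "mtrace (T u) = mtrace u"
proof -
  have op: "operation n n' T" using T unfolding tp_operation_def by simp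
  have Tu: "T u \<in> carrier_mat n' n'" using operationD(1)[OF op u] .
  have "mtrace (T u) = (\<Sum>a<n'. \<Sum>i<n. \<Sum>j<n. u $$ (i,j) * T (munit n i j) $$ (a,a))"
    unfolding mtrace_def using Tu op_expand[OF op u] by simp
  also have "\<dots> = (\<Sum>i<n. \<Sum>j<n. u $$ (i,j) * (\<Sum>a<n'. T (munit n i j) $$ (a,a)))"
    by (simp add: sum_distrib_left sum.swap[of _ "{..<n'}"])
  also have "\<dots> = (\<Sum>i<n. \<Sum>j<n. u $$ (i,j) * mtrace (T (munit n i j)))"
  proof -
    have "dim_row (T (munit n i j)) = n'" for i j using operationD(1)[OF op munit_carrier, of i j] by simp
    then show ?thesis unfolding mtrace_def by simp
  qed
  also have "\<dots> = (\<Sum>i<n. \<Sum>j<n. if i = j then u $$ (i,j) else 0)"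
    by (intro sum.cong refl) (simp add: tp_trace_munit[OF T])
  also have "\<dots> = mtrace u" unfolding mtrace_def using u by simp
  finally show ?thesis .
qed

lemma cn_tensor: assumes d: "density (n*m) \<sigma>" and T1: "tp_operation n n' T1" and T2: "tp_operation m m' T2"
  shows "1 \<le> cross_norm n' m' (tensor_map n m n' m' T1 T2 \<sigma>)"
    "cross_norm n' m' (tensor_map n m n' m' T1 T2 \<sigma>) \<le> cross_norm n m \<sigma>"
proof -
  have op1: "operation n n' T1" and op2: "operation m m' T2" using T1 T2 unfolding tp_operation_def by auto
  have sc: "\<sigma> \<in> carrier_mat (n*m) (n*m)" using densityD(3)[OF d] .
  define s2 where "s2 = tensor_map n m n' m' T1 T2 \<sigma>"
  have s2c: "s2 \<in> carrier_mat (n'*m') (n'*m')" unfolding s2_def tensor_map_def by simp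
  obtain x0 where "x0 \<in> cnset n m \<sigma>" using cnset_nonempty[OF sc] by blast
  then obtain N u v where u: "\<And>i. i < N \<Longrightarrow> u i \<in> carrier_mat n n" and v: "\<And>i. i < N \<Longrightarrow> v i \<in> carrier_mat m m"
    and sd: "\<sigma> = msum (n*m) (n*m) N (\<lambda>i. kron (u i) (v i))"
    by (rule cnsetE) blast
  have s2d: "s2 = msum (n'*m') (n'*m') N (\<lambda>p. kron (T1 (u p)) (T2 (v p)))"
    unfolding s2_def sd by (rule tensor_map_decomp[OF op1 op2 u v])
  have "mtrace s2 = (\<Sum>i<N. mtrace (T1 (u i)) * mtrace (T2 (v i)))"
    unfolding s2d by (rule trace_decomp) (use operationD(1)[OF op1 u] operationD(1)[OF op2 v] in auto)
  also have "\<dots> = (\<Sum>i<N. mtrace (u i) * mtrace (v i))" by (intro sum.cong refl) (simp add: tp_trace[OF T1 u] tp_trace[OF T2 v])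
  also have "\<dots> = mtrace \<sigma>" unfolding sd by (rule trace_decomp[OF u v, symmetric])
  also have "\<dots> = 1" using densityD(2)[OF d] .
  finally show "1 \<le> cross_norm n' m' (tensor_map n m n' m' T1 T2 \<sigma>)" using cn_ge1[OF s2c] unfolding s2_def by simp
  show "cross_norm n' m' (tensor_map n m n' m' T1 T2 \<sigma>) \<le> cross_norm n m \<sigma>"
  proof (rule cn_mono_map[OF cnset_nonempty[OF sc]])
    fix x assume "x \<in> cnset n m \<sigma>"
    then obtain N u v where u: "\<And>i. i < N \<Longrightarrow> u i \<in> carrier_mat n n" and v: "\<And>i. i < N \<Longrightarrow> v i \<in> carrier_mat m m"
      and sd: "\<sigma> = msum (n*m) (n*m) N (\<lambda>i. kron (u i) (v i))" and x: "x = (\<Sum>i<N. trace_norm (u i) * trace_norm (v i))"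
      by (rule cnsetE) blast
    have "(\<Sum>i<N. trace_norm (T1 (u i)) * trace_norm (T2 (v i))) \<in> cnset n' m' (tensor_map n m n' m' T1 T2 \<sigma>)"
      unfolding sd by (rule cnsetI[OF _ tensor_map_decomp[OF op1 op2 u v] refl])
        (use operationD(1)[OF op1 u] operationD(1)[OF op2 v] in auto)
    moreover have "(\<Sum>i<N. trace_norm (T1 (u i)) * trace_norm (T2 (v i))) \<le> x"
      unfolding x
    proof (rule sum_mono)
      fix i assume "i \<in> {..<N}" then have i: "i < N" by simp
      show "trace_norm (T1 (u i)) * trace_norm (T2 (v i)) \<le> trace_norm (u i) * trace_norm (v i)"
        by (rule mult_mono[OF op_contract[OF op1 u[OF i]] op_contract[OF op2 v[OF i]] tn_nonneg[OF u[OF i]]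
          tn_nonneg[OF operationD(1)[OF op2 v[OF i]]]])
    qed
    ultimately show "\<exists>y\<in>cnset n' m' (tensor_map n m n' m' T1 T2 \<sigma>). y \<le> x" by blast
  qed
qed


lemma unitary_isometry: "unitary n U \<Longrightarrow> isometry n n U"
  unfolding unitary_def isometry_def by auto

lemma ent_measure_g:
  fixes g :: "real \<Rightarrow> real"
  assumes cv: "convex_on {1..} g" and mo: "mono_on {1..} g" and g1: "g 1 = 0"
  shows "ent_measure (\<lambda>n m \<sigma>. g (cross_norm n m \<sigma>))"
proof -
  have ge1: "1 \<le> cross_norm n m \<sigma>" if d: "density (n*m) \<sigma>" for n m \<sigma>
    using cn_ge1[OF densityD(3)[OF d] densityD(2)[OF d]] .
  have E0a: "\<forall>n m \<sigma>. density (n*m) \<sigma> \<longrightarrow> 0 \<le> g (cross_norm n m \<sigma>)"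
  proof (intro allI impI)
    fix n m \<sigma> assume d: "density (n*m) \<sigma>"
    have "g 1 \<le> g (cross_norm n m \<sigma>)" using mono_onD[OF mo, of 1 "cross_norm n m \<sigma>"] ge1[OF d] by simp
    then show "0 \<le> g (cross_norm n m \<sigma>)" using g1 by simp
  qed
  have E0b: "\<forall>n m n' m' V1 V2 \<sigma>. density (n*m) \<sigma> \<and> isometry n n' V1 \<and> isometry m m' V2 \<longrightarrow>
      g (cross_norm n' m' (kron V1 V2 * \<sigma> * adj (kron V1 V2))) = g (cross_norm n m \<sigma>)"
    using cn_iso densityD(3) by metis
  have E1: "\<forall>n m \<sigma>. density (n*m) \<sigma> \<and> separable n m \<sigma> \<longrightarrow> g (cross_norm n m \<sigma>) = 0"
    using cn_separable g1 by metis
  have E2: "\<forall>n m U1 U2 \<sigma>. density (n*m) \<sigma> \<and> unitary n U1 \<and> unitary m U2 \<longrightarrow>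
      g (cross_norm n m (kron U1 U2 * \<sigma> * adj (kron U1 U2))) = g (cross_norm n m \<sigma>)"
    using cn_iso densityD(3) unitary_isometry by metis
  have E3: "\<forall>n m n' m' T1 T2 \<sigma>. density (n*m) \<sigma> \<and> tp_operation n n' T1 \<and> tp_operation m m' T2 \<longrightarrow>
      g (cross_norm n' m' (tensor_map n m n' m' T1 T2 \<sigma>)) \<le> g (cross_norm n m \<sigma>)"
  proof (intro allI impI)
    fix n m n' m' T1 T2 \<sigma> assume h: "density (n*m) \<sigma> \<and> tp_operation n n' T1 \<and> tp_operation m m' T2"
    then have a: "1 \<le> cross_norm n' m' (tensor_map n m n' m' T1 T2 \<sigma>)"
      and b: "cross_norm n' m' (tensor_map n m n' m' T1 T2 \<sigma>) \<le> cross_norm n m \<sigma>"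
      using cn_tensor by blast+
    show "g (cross_norm n' m' (tensor_map n m n' m' T1 T2 \<sigma>)) \<le> g (cross_norm n m \<sigma>)"
      by (rule mono_onD[OF mo]) (use a b in auto)
  qed
  have E4: "\<forall>n m \<sigma> \<tau> (p::real). density (n*m) \<sigma> \<and> density (n*m) \<tau> \<and> 0 \<le> p \<and> p \<le> 1 \<longrightarrow>
      g (cross_norm n m (complex_of_real p \<cdot>\<^sub>m \<sigma> + complex_of_real (1 - p) \<cdot>\<^sub>m \<tau>))
        \<le> p * g (cross_norm n m \<sigma>) + (1 - p) * g (cross_norm n m \<tau>)"
  proof (intro allI impI)
    fix n m \<sigma> \<tau> and p :: real
    assume h: "density (n*m) \<sigma> \<and> density (n*m) \<tau> \<and> 0 \<le> p \<and> p \<le> 1"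
    then have ds: "density (n*m) \<sigma>" and dt: "density (n*m) \<tau>" and p: "0 \<le> p" "p \<le> 1" by auto
    have sc: "\<sigma> \<in> carrier_mat (n*m) (n*m)" and tc: "\<tau> \<in> carrier_mat (n*m) (n*m)" using densityD(3) ds dt by auto
    define mix where "mix = complex_of_real p \<cdot>\<^sub>m \<sigma> + complex_of_real (1 - p) \<cdot>\<^sub>m \<tau>"
    have mc: "mix \<in> carrier_mat (n*m) (n*m)" unfolding mix_def using sc tc by simp
    have "mtrace mix = complex_of_real p * mtrace \<sigma> + complex_of_real (1 - p) * mtrace \<tau>"
      unfolding mix_def using sc tc by (simp add: mtrace_add[of _ "n*m"] mtrace_smult[of _ "n*m"])
    then have mt: "mtrace mix = 1" using densityD(2)[OF ds] densityD(2)[OF dt] by simp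
    define a where "a = cross_norm n m \<sigma>"
    define b where "b = cross_norm n m \<tau>"
    have a1: "1 \<le> a" "1 \<le> b" unfolding a_def b_def using ge1 ds dt by auto
    have cm1: "1 \<le> cross_norm n m mix" using cn_ge1[OF mc mt] .
    have cvx: "cross_norm n m mix \<le> p * a + (1 - p) * b" unfolding mix_def a_def b_def by (rule cn_convex[OF sc tc p])
    have pa: "1 \<le> p * a + (1 - p) * b"
    proof -
      have "p * 1 + (1 - p) * 1 \<le> p * a + (1 - p) * b" using a1 p by (intro add_mono mult_left_mono) auto
      then show ?thesis by simp
    qed
    have "g (cross_norm n m mix) \<le> g (p * a + (1 - p) * b)"
      by (rule mono_onD[OF mo]) (use cm1 pa cvx in auto)
    also have "g (p * a + (1 - p) * b) \<le> p * g a + (1 - p) * g b"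
      using convex_onD[OF cv, of "1 - p" a b] p a1 by simp
    finally show "g (cross_norm n m (complex_of_real p \<cdot>\<^sub>m \<sigma> + complex_of_real (1 - p) \<cdot>\<^sub>m \<tau>))
        \<le> p * g (cross_norm n m \<sigma>) + (1 - p) * g (cross_norm n m \<tau>)" unfolding mix_def a_def b_def .
  qed
  show ?thesis unfolding ent_measure_def using E0a E0b E1 E2 E3 E4 by blast
qed

theorem mainTheorem4:
  fixes f :: "real \<Rightarrow> real"
  assumes "convex_on {1..} f"
    and "mono_on {1..} f"
    and "f 1 = 0"
  shows "ent_measure (\<lambda>n m \<sigma>. f (cross_norm n m \<sigma>))
    \<and> ent_measure (\<lambda>n m \<sigma>. cross_norm n m \<sigma> - 1)"
proof
  show "ent_measure (\<lambda>n m \<sigma>. f (cross_norm n m \<sigma>))" using ent_measure_g[OF assms] .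
  have cv: "convex_on {1..} (\<lambda>x::real. x - 1)"
    unfolding convex_on_def by (auto simp: algebra_simps)
  have mo: "mono_on {1..} (\<lambda>x::real. x - 1)" by (auto intro: mono_onI)
  show "ent_measure (\<lambda>n m \<sigma>. cross_norm n m \<sigma> - 1)" using ent_measure_g[OF cv mo] by simp
qed


end
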